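(* Let $n$ be a positive integer and $c_1,\dots,c_n$ non-negative integers with $n=c_1+2c_2+\cdots+nc_n$, $\mathbf c=(c_1,\dots,c_n)$. The coefficient of $t_1^{c_1}\cdots t_n^{c_n}/(c_1!\cdots c_n!)$ in \[ \prod_{j\ge1}\exp(t_{2j-1})\;\cosh\Big(\sum_{j\ge1}\Big(\frac{2j-1}{2}t_{2j-1}^2+j\,t_{2j}^2\Big)\Big) \] is the number of even square roots in $S_n$ of a permutation of cycle type $\mathbf c$, and the coefficient of the same monomial in \[ \prod_{j\ge1}\exp(t_{2j-1})\;\sinh\Big(\sum_{j\ge1}\Big(\frac{2j-1}{2}t_{2j-1}^2+j\,t_{2j}^2\Big)\Big) \] is the number of odd square roots in $S_n$ of a permutation of cycle type $\mathbf c$.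
   Context: The cycle type of $\sigma\in S_n$ is $(c_1,\dots,c_n)$ where $c_i$ is the number of $i$-cycles (fixed points count as $1$-cycles). A square root of $\sigma$ is $\tau\in S_n$ with $\tau^2=\sigma$; it is even/odd according to the parity of $\tau$. The series are formal power series in $t_1,t_2,\dots$. *)

theory Defs
  imports Complex_Main "HOL-Combinatorics.Combinatorics"
begin

(* Formal power series in the variables t_1, t_2, ... with real coefficients.
   A monomial t_1^{m 1} t_2^{m 2} ... is an exponent vector m :: nat => nat
   (finitely supported); a series is its coefficient function. *)
type_synonym mser = "(nat \<Rightarrow> nat) \<Rightarrow> real"

definition mzero :: mser where "mzero = (\<lambda>m. 0)"
definition mone :: mser where "mone = (\<lambda>m. if m = (\<lambda>_. 0) then 1 else 0)"
definition madd :: "mser \<Rightarrow> mser \<Rightarrow> mser" where "madd f g = (\<lambda>m. f m + g m)"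
definition mneg :: "mser \<Rightarrow> mser" where "mneg f = (\<lambda>m. - f m)"
definition msmult :: "real \<Rightarrow> mser \<Rightarrow> mser" where "msmult a f = (\<lambda>m. a * f m)"

definition mmul :: "mser \<Rightarrow> mser \<Rightarrow> mser" where
  "mmul f g = (\<lambda>m. \<Sum>(a, b) \<in> {(a, b). \<forall>i. a i + b i = m i}. f a * g b)"

definition mpow :: "mser \<Rightarrow> nat \<Rightarrow> mser" where
  "mpow f k = (mmul f ^^ k) mone"

definition mvar :: "nat \<Rightarrow> mser" where
  "mvar i = (\<lambda>m. if m = (\<lambda>k. if k = i then 1 else 0) then 1 else 0)"

definition mdeg :: "(nat \<Rightarrow> nat) \<Rightarrow> nat" where
  "mdeg m = (\<Sum>i \<in> {i. m i \<noteq> 0}. m i)"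

(* exp f = sum_k f^k / k!, for series f with zero constant term (the only case used);
   then f^k only has monomials of degree >= k, so the coefficientwise sum is finite. *)
definition mexp :: "mser \<Rightarrow> mser" where
  "mexp f = (\<lambda>m. \<Sum>k \<le> mdeg m. mpow f k m / fact k)"

definition mcosh :: "mser \<Rightarrow> mser" where
  "mcosh f = msmult (1/2) (madd (mexp f) (mexp (mneg f)))"

definition msinh :: "mser \<Rightarrow> mser" where
  "msinh f = msmult (1/2) (madd (mexp f) (mneg (mexp (mneg f))))"

(* coefficientwise infinite sum sum_{j} F j (each coefficient has finitely many
   nonzero contributions in the uses below) *)
definition msuminf :: "(nat \<Rightarrow> mser) \<Rightarrow> mser" where
  "msuminf F = (\<lambda>m. \<Sum>j \<in> {j. F j m \<noteq> 0}. F j m)"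

definition oddvars :: mser where
  "oddvars = msuminf (\<lambda>j. if j = 0 then mzero else mvar (2*j - 1))"

definition quadsum :: mser where
  "quadsum = msuminf (\<lambda>j. if j = 0 then mzero else
      madd (msmult ((2 * real j - 1) / 2) (mpow (mvar (2*j - 1)) 2))
           (msmult (real j) (mpow (mvar (2*j)) 2)))"

(* prod_{j>=1} exp(t_{2j-1}) cosh(...) and ... sinh(...);
   prod_{j>=1} exp(t_{2j-1}) is written as exp(sum_{j>=1} t_{2j-1}) *)
definition even_series :: mser where
  "even_series = mmul (mexp oddvars) (mcosh quadsum)"

definition odd_series :: mser where
  "odd_series = mmul (mexp oddvars) (msinh quadsum)"

definition egf_coeff :: "mser \<Rightarrow> nat \<Rightarrow> (nat \<Rightarrow> nat) \<Rightarrow> real" where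
  "egf_coeff f n c = f c * (\<Prod>i = 1..n. fact (c i))"

definition has_cycle_type :: "nat \<Rightarrow> (nat \<Rightarrow> nat) \<Rightarrow> (nat \<Rightarrow> nat) \<Rightarrow> bool" where
  "has_cycle_type n \<sigma> c =
     (\<forall>i \<in> {1..n}. card {orbit \<sigma> x | x. x \<in> {1..n} \<and> card (orbit \<sigma> x) = i} = c i)"

end

theory Submission
  imports Defs "HOL-Number_Theory.Cong" "HOL-Library.FuncSet"
begin

lemma orb_eq:
  assumes "permutation \<sigma>" "y \<in> orbit \<sigma> x"
  shows "orbit \<sigma> y = orbit \<sigma> x"
proof
  show "orbit \<sigma> y \<subseteq> orbit \<sigma> x" using assms(2) orbit_trans by fast
  have "x \<in> orbit \<sigma> y"
    using orbit_swap[OF permutation_self_in_orbit[OF assms(1)] assms(2)] .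
  then show "orbit \<sigma> x \<subseteq> orbit \<sigma> y" using orbit_trans by fast
qed

lemma orb_disj:
  assumes "permutation \<sigma>" "orbit \<sigma> x \<noteq> orbit \<sigma> y"
  shows "orbit \<sigma> x \<inter> orbit \<sigma> y = {}"
proof (rule ccontr)
  assume "orbit \<sigma> x \<inter> orbit \<sigma> y \<noteq> {}"
  then obtain z where "z \<in> orbit \<sigma> x" "z \<in> orbit \<sigma> y" by blast
  then show False using orb_eq[OF assms(1)] assms(2) by metis
qed

lemma orbit_range:
  assumes "permutation \<sigma>"
  shows "orbit \<sigma> x = range (\<lambda>i. (\<sigma> ^^ i) x)"
  using orbit_altdef_permutation[OF assms] by auto

lemma card_orbit_lp:
  assumes "permutation \<sigma>"
  shows "card (orbit \<sigma> x) = least_power \<sigma> x"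
proof -
  have "orbit \<sigma> x = set (support \<sigma> x)"
    using orbit_range[OF assms] support_set[OF assms] by simp
  then show ?thesis using distinct_card[OF cycle_of_permutation[OF assms, of x]] by simp
qed

lemma pow_eq_iff:
  assumes "permutation \<sigma>"
  shows "(\<sigma> ^^ a) x = (\<sigma> ^^ b) x \<longleftrightarrow> [a = b] (mod least_power \<sigma> x)"
proof -
  have inj: "inj \<sigma>" using assms permutation_bijective bij_is_inj by blast
  have *: "(\<sigma> ^^ a) x = (\<sigma> ^^ b) x \<longleftrightarrow> [b = a] (mod least_power \<sigma> x)" if "a \<le> b" for a b
  proof -
    have "(\<sigma> ^^ a) x = (\<sigma> ^^ b) x \<longleftrightarrow> (\<sigma> ^^ (b - a)) x = x"
    proof
      assume "(\<sigma> ^^ a) x = (\<sigma> ^^ b) x" then show "(\<sigma> ^^ (b - a)) x = x"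
        using funpow_diff[OF inj that] by blast
    next
      assume "(\<sigma> ^^ (b - a)) x = x"
      then have "(\<sigma> ^^ a) ((\<sigma> ^^ (b - a)) x) = (\<sigma> ^^ a) x" by simp
      then show "(\<sigma> ^^ a) x = (\<sigma> ^^ b) x"
        using that by (metis funpow_add le_add_diff_inverse o_apply)
    qed
    also have "\<dots> \<longleftrightarrow> least_power \<sigma> x dvd (b - a)"
      using least_power_dvd[OF assms] by simp
    also have "\<dots> \<longleftrightarrow> [b = a] (mod least_power \<sigma> x)"
      using cong_altdef_nat that by simp
    finally show ?thesis .
  qed
  show ?thesis
  proof (cases "a \<le> b")
    case True then show ?thesis using *[OF True] cong_sym_eq by metis
  next
    case False then show ?thesis using *[of b a] by (metis linorder_le_cases)
  qed
qed


definition roots :: "'a set \<Rightarrow> ('a \<Rightarrow> 'a) \<Rightarrow> ('a \<Rightarrow> 'a) set" where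
  "roots S \<sigma> = {\<tau>. \<tau> permutes S \<and> \<tau> \<circ> \<tau> = \<sigma>}"

definition wt :: "real \<Rightarrow> ('a \<Rightarrow> 'a) \<Rightarrow> real" where
  "wt s \<tau> = (if evenperm \<tau> then 1 else s)"

definition Rw :: "real \<Rightarrow> 'a set \<Rightarrow> ('a \<Rightarrow> 'a) \<Rightarrow> real" where
  "Rw s S \<sigma> = (\<Sum>\<tau>\<in>roots S \<sigma>. wt s \<tau>)"

lemma finite_roots: "finite S \<Longrightarrow> finite (roots S \<sigma>)"
  unfolding roots_def by (rule finite_subset[OF _ finite_permutations]) auto

lemma closed_image:
  assumes "finite A" "\<sigma> permutes S" "\<forall>z\<in>A. \<sigma> z \<in> A"
  shows "\<sigma> ` A = A"
  using endo_inj_surj[OF assms(1)] assms(3) permutes_inj[OF assms(2)]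
  by (simp add: image_subset_iff inj_on_subset)

lemma restr_permutes:
  assumes "f permutes S" "B \<subseteq> S" "f ` B = B"
  shows "perm_restrict f (S - B) permutes (S - B)"
proof (rule bij_imp_permutes)
  have inj: "inj f" using permutes_inj[OF assms(1)] .
  have "f ` (S - B) = S - B"
    using image_set_diff[OF inj, of S B] permutes_image[OF assms(1)] assms(3) by simp
  then have "bij_betw f (S - B) (S - B)"
    unfolding bij_betw_def using inj inj_on_subset by blast
  then show "bij_betw (perm_restrict f (S - B)) (S - B) (S - B)"
    using bij_betw_cong[of "S - B" f "perm_restrict f (S - B)" "S - B"]
    by (metis perm_restrict_simps(1))
next
  show "\<And>x. x \<notin> S - B \<Longrightarrow> perm_restrict f (S - B) x = x"
    by (auto simp add: perm_restrict_def)
qed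

lemma comp_disj:
  assumes "\<rho> permutes A" "\<tau>' permutes (S - A)"
  shows "(\<rho> \<circ> \<tau>') z = (if z \<in> A then \<rho> z else \<tau>' z)"
proof (cases "z \<in> A")
  case True then show ?thesis using permutes_not_in[OF assms(2)] by simp
next
  case False
  then have "\<tau>' z \<notin> A"
    using permutes_in_image[OF assms(2)] permutes_not_in[OF assms(2)] by (cases "z \<in> S") auto
  then show ?thesis using False permutes_not_in[OF assms(1)] by simp
qed

lemma split_sum:
  assumes fin: "finite S" and \<sigma>: "\<sigma> permutes S" and AS: "A \<subseteq> S" and Acl: "\<forall>z\<in>A. \<sigma> z \<in> A"
    and \<rho>: "\<rho> permutes A" and \<rho>\<sigma>: "\<forall>z\<in>A. \<rho> (\<rho> z) = \<sigma> z" and s: "s * s = 1"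
  shows "(\<Sum>\<tau>\<in>{\<tau>\<in>roots S \<sigma>. \<forall>z\<in>A. \<tau> z = \<rho> z}. wt s \<tau>)
         = wt s \<rho> * Rw s (S - A) (perm_restrict \<sigma> (S - A))"
proof -
  let ?T = "{\<tau>\<in>roots S \<sigma>. \<forall>z\<in>A. \<tau> z = \<rho> z}"
  let ?\<sigma>' = "perm_restrict \<sigma> (S - A)"
  have finA: "finite A" using AS fin finite_subset by blast
  have \<sigma>A: "\<sigma> ` A = A" using closed_image[OF finA \<sigma> Acl] .
  have permA: "permutation \<rho>" using permutes_imp_permutation[OF finA \<rho>] .
  have "Rw s (S - A) ?\<sigma>' * wt s \<rho> = (\<Sum>\<tau>'\<in>roots (S - A) ?\<sigma>'. wt s \<tau>' * wt s \<rho>)"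
    unfolding Rw_def by (simp add: sum_distrib_right)
  also have "\<dots> = (\<Sum>\<tau>\<in>?T. wt s \<tau>)"
  proof (rule sum.reindex_bij_witness[where j = "\<lambda>\<tau>'. \<rho> \<circ> \<tau>'" and i = "\<lambda>\<tau>. perm_restrict \<tau> (S - A)"])
    fix \<tau>' assume "\<tau>' \<in> roots (S - A) ?\<sigma>'"
    then have \<tau>': "\<tau>' permutes (S - A)" "\<tau>' \<circ> \<tau>' = ?\<sigma>'" unfolding roots_def by auto
    show "perm_restrict (\<rho> \<circ> \<tau>') (S - A) = \<tau>'"
    proof
      fix z show "perm_restrict (\<rho> \<circ> \<tau>') (S - A) z = \<tau>' z"
        using comp_disj[OF \<rho> \<tau>'(1), of z] permutes_not_in[OF \<tau>'(1), of z]
        by (auto simp: perm_restrict_def)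
    qed
  next
    fix \<tau>' assume "\<tau>' \<in> roots (S - A) ?\<sigma>'"
    then have \<tau>': "\<tau>' permutes (S - A)" "\<tau>' \<circ> \<tau>' = ?\<sigma>'" unfolding roots_def by auto
    have "\<rho> \<circ> \<tau>' permutes S"
      using permutes_compose[OF permutes_subset[OF \<tau>'(1)] permutes_subset[OF \<rho> AS]] by auto
    moreover have "(\<rho> \<circ> \<tau>') \<circ> (\<rho> \<circ> \<tau>') = \<sigma>"
    proof
      fix z
      show "((\<rho> \<circ> \<tau>') \<circ> (\<rho> \<circ> \<tau>')) z = \<sigma> z"
      proof (cases "z \<in> A")
        case True
        then have "\<rho> z \<in> A" using permutes_in_image[OF \<rho>] by simp
        then show ?thesis using True comp_disj[OF \<rho> \<tau>'(1)] \<rho>\<sigma> by simp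
      next
        case False
        have "\<tau>' z \<notin> A"
          using False permutes_in_image[OF \<tau>'(1)] permutes_not_in[OF \<tau>'(1)] by (cases "z \<in> S") auto
        moreover have "\<tau>' (\<tau>' z) = ?\<sigma>' z" using \<tau>'(2) by (metis comp_apply)
        moreover have "\<sigma> z \<notin> A" using False \<sigma>A permutes_inj[OF \<sigma>]
          by (metis image_iff inj_eq)
        ultimately show ?thesis
          using False comp_disj[OF \<rho> \<tau>'(1)] permutes_not_in[OF \<sigma>, of z] permutes_not_in[OF \<rho>]
          by (auto simp: perm_restrict_def)
      qed
    qed
    moreover have "\<forall>z\<in>A. (\<rho> \<circ> \<tau>') z = \<rho> z" using comp_disj[OF \<rho> \<tau>'(1)] by simp
    ultimately show "\<rho> \<circ> \<tau>' \<in> ?T" unfolding roots_def by simp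
  next
    fix \<tau> assume "\<tau> \<in> ?T"
    then have \<tau>: "\<tau> permutes S" "\<tau> \<circ> \<tau> = \<sigma>" "\<forall>z\<in>A. \<tau> z = \<rho> z" unfolding roots_def by auto
    have \<tau>A: "\<tau> ` A = A" using \<tau>(3) permutes_image[OF \<rho>] by (auto simp: image_def)
    have pr: "perm_restrict \<tau> (S - A) permutes (S - A)" using restr_permutes[OF \<tau>(1) AS \<tau>A] .
    show "\<rho> \<circ> perm_restrict \<tau> (S - A) = \<tau>"
    proof
      fix z show "(\<rho> \<circ> perm_restrict \<tau> (S - A)) z = \<tau> z"
        using comp_disj[OF \<rho> pr, of z] \<tau>(3) permutes_not_in[OF \<tau>(1)]
        by (auto simp: perm_restrict_def)
    qed
  next
    fix \<tau> assume "\<tau> \<in> ?T"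
    then have \<tau>: "\<tau> permutes S" "\<tau> \<circ> \<tau> = \<sigma>" "\<forall>z\<in>A. \<tau> z = \<rho> z" unfolding roots_def by auto
    have \<tau>A: "\<tau> ` A = A" using \<tau>(3) permutes_image[OF \<rho>] by (auto simp: image_def)
    have pr: "perm_restrict \<tau> (S - A) permutes (S - A)" using restr_permutes[OF \<tau>(1) AS \<tau>A] .
    have "perm_restrict \<tau> (S - A) \<circ> perm_restrict \<tau> (S - A) = ?\<sigma>'"
    proof
      fix z
      have "\<tau> z \<in> S - A" if "z \<in> S - A"
        using that permutes_in_image[OF pr, of z] by (simp add: perm_restrict_def)
      then show "(perm_restrict \<tau> (S - A) \<circ> perm_restrict \<tau> (S - A)) z = ?\<sigma>' z"
        using \<tau>(2) by (auto simp: perm_restrict_def fun_eq_iff)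
    qed
    then show "perm_restrict \<tau> (S - A) \<in> roots (S - A) ?\<sigma>'"
      unfolding roots_def using pr by simp
  next
    fix \<tau>' assume "\<tau>' \<in> roots (S - A) ?\<sigma>'"
    then have \<tau>': "\<tau>' permutes (S - A)" unfolding roots_def by auto
    have permr: "permutation \<tau>'"
      using permutes_imp_permutation[OF _ \<tau>'] fin by simp
    have "evenperm (\<rho> \<circ> \<tau>') = (evenperm \<rho> = evenperm \<tau>')"
      using evenperm_comp[OF permA permr] by simp
    then show "wt s (\<rho> \<circ> \<tau>') = wt s \<tau>' * wt s \<rho>"
      unfolding wt_def using s by auto
  qed
  finally show ?thesis by (simp add: mult.commute)
qed


definition OS :: "'a set \<Rightarrow> ('a \<Rightarrow> 'a) \<Rightarrow> nat \<Rightarrow> 'a set set" where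
  "OS S \<sigma> k = {orbit \<sigma> x | x. x \<in> S \<and> card (orbit \<sigma> x) = k}"

definition ct :: "'a set \<Rightarrow> ('a \<Rightarrow> 'a) \<Rightarrow> nat \<Rightarrow> nat" where
  "ct S \<sigma> k = card (OS S \<sigma> k)"

lemma finite_OS: "finite S \<Longrightarrow> finite (OS S \<sigma> k)"
proof -
  assume "finite S"
  have "OS S \<sigma> k = (\<lambda>x. orbit \<sigma> x) ` {x\<in>S. card (orbit \<sigma> x) = k}"
    unfolding OS_def by auto
  then show ?thesis using \<open>finite S\<close> by simp
qed

lemma orbit_in_closed:
  assumes "w \<in> A" "\<forall>z\<in>A. \<sigma> z \<in> A"
  shows "orbit \<sigma> w \<subseteq> A"
proof
  fix v assume "v \<in> orbit \<sigma> w" then show "v \<in> A"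
    by induct (use assms in auto)
qed

lemma orbit_avoid:
  assumes "finite S" "\<sigma> permutes S" "\<forall>z\<in>A. \<sigma> z \<in> A" "z \<notin> A"
  shows "orbit \<sigma> z \<inter> A = {}"
proof (rule ccontr)
  have perm: "permutation \<sigma>" using permutes_imp_permutation[OF assms(1,2)] .
  assume "orbit \<sigma> z \<inter> A \<noteq> {}"
  then obtain w where w: "w \<in> orbit \<sigma> z" "w \<in> A" by blast
  have "z \<in> orbit \<sigma> w" using orb_eq[OF perm w(1)] permutation_self_in_orbit[OF perm] by metis
  then show False using orbit_in_closed[OF w(2) assms(3)] assms(4) by blast
qed

lemma orbit_restr:
  assumes "finite S" "\<sigma> permutes S" "\<forall>z\<in>A. \<sigma> z \<in> A" "z \<in> S - A"
  shows "orbit (perm_restrict \<sigma> (S - A)) z = orbit \<sigma> z"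
proof (rule orbit_cong)
  have perm: "permutation \<sigma>" using permutes_imp_permutation[OF assms(1,2)] .
  show "z \<in> orbit \<sigma> z" using permutation_self_in_orbit[OF perm] .
  fix v assume "v \<in> orbit \<sigma> z"
  moreover have "orbit \<sigma> z \<subseteq> S" using permutes_orbit_subset[OF assms(2)] assms(4) by simp
  moreover have "orbit \<sigma> z \<inter> A = {}" using orbit_avoid[OF assms(1-3)] assms(4) by blast
  ultimately have "v \<in> S - A" by blast
  then show "perm_restrict \<sigma> (S - A) v = \<sigma> v" by (simp add: perm_restrict_def)
qed

lemma OS_mem: "Ob \<in> OS S \<sigma> k \<longleftrightarrow> (\<exists>x. x \<in> S \<and> Ob = orbit \<sigma> x \<and> card Ob = k)"
  unfolding OS_def by blast

lemma OS_restr: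
  assumes "finite S" "\<sigma> permutes S" "\<forall>z\<in>A. \<sigma> z \<in> A"
  shows "OS (S - A) (perm_restrict \<sigma> (S - A)) k = {Ob \<in> OS S \<sigma> k. Ob \<inter> A = {}}"
proof -
  have perm: "permutation \<sigma>" using permutes_imp_permutation[OF assms(1,2)] .
  show ?thesis
  proof (intro set_eqI iffI)
    fix Ob assume "Ob \<in> OS (S - A) (perm_restrict \<sigma> (S - A)) k"
    then obtain z where z: "z \<in> S - A" "Ob = orbit (perm_restrict \<sigma> (S - A)) z"
      "card Ob = k" unfolding OS_mem by blast
    then have e: "Ob = orbit \<sigma> z" using orbit_restr[OF assms z(1)] by simp
    have "z \<in> S" "z \<notin> A" using z(1) by auto
    then have "Ob \<in> OS S \<sigma> k" unfolding OS_mem using e z(3) by blast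
    moreover have "Ob \<inter> A = {}" using e orbit_avoid[OF assms \<open>z \<notin> A\<close>] by simp
    ultimately show "Ob \<in> {Ob \<in> OS S \<sigma> k. Ob \<inter> A = {}}" by simp
  next
    fix Ob assume "Ob \<in> {Ob \<in> OS S \<sigma> k. Ob \<inter> A = {}}"
    then have "Ob \<in> OS S \<sigma> k" "Ob \<inter> A = {}" by auto
    then obtain z where z: "z \<in> S" "Ob = orbit \<sigma> z" "card Ob = k" "Ob \<inter> A = {}"
      unfolding OS_mem by blast
    then have "z \<notin> A" using permutation_self_in_orbit[OF perm, of z] by blast
    then have zz: "z \<in> S - A" using z(1) by blast
    have "Ob = orbit (perm_restrict \<sigma> (S - A)) z" using z(2) orbit_restr[OF assms zz] by simp
    then show "Ob \<in> OS (S - A) (perm_restrict \<sigma> (S - A)) k"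
      unfolding OS_mem using zz z(3) by blast
  qed
qed

lemma evenperm_cycle:
  assumes "distinct cs" "cs \<noteq> []"
  shows "evenperm (cycle_of_list cs) \<longleftrightarrow> odd (length cs)"
  using assms
proof (induction cs rule: cycle_of_list.induct)
  case (1 i j cs)
  have "evenperm (transpose i j \<circ> cycle_of_list (j # cs)) \<longleftrightarrow>
        (evenperm (transpose i j) = evenperm (cycle_of_list (j # cs)))"
    by (rule evenperm_comp[OF permutation_swap_id permutation_of_cycle])
  moreover have "i \<noteq> j" using "1.prems" by auto
  moreover have "evenperm (cycle_of_list (j # cs)) \<longleftrightarrow> odd (length (j # cs))"
    using "1.IH" "1.prems" by simp
  ultimately have "evenperm (transpose i j \<circ> cycle_of_list (j # cs)) \<longleftrightarrow> odd (length (i # j # cs))"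
    by (simp add: evenperm_swap)
  then show ?case by (metis cycle_of_list.simps(1))
next
  case "2_1" then show ?case by simp
next
  case ("2_2" v) then show ?case by simp
qed

lemma evenperm_funpow:
  assumes "permutation p" "evenperm p"
  shows "evenperm (p ^^ h)"
proof (induction h)
  case (Suc h)
  then show ?case
    using evenperm_comp[OF assms(1) permutation_funpow[OF assms(1), of h]] assms(2)
    by (metis funpow.simps(2))
qed simp

lemma funpow_comm: "(f ^^ a) ((f ^^ b) x) = (f ^^ b) ((f ^^ a) x)"
  by (metis funpow_add add.commute comp_apply)

lemma root_commute:
  assumes "\<tau> \<circ> \<tau> = \<sigma>"
  shows "\<tau> ((\<sigma> ^^ i) z) = (\<sigma> ^^ i) (\<tau> z)"
proof (induction i)
  case (Suc i)
  have "\<tau> (\<sigma> w) = \<sigma> (\<tau> w)" for w using assms by (metis comp_apply)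
  then show ?case using Suc by simp
qed simp

fun G :: "real \<Rightarrow> nat \<Rightarrow> nat \<Rightarrow> real" where
  "G s k 0 = 1"
| "G s k (Suc 0) = (if odd k then 1 else 0)"
| "G s k (Suc (Suc m)) = (if odd k then G s k (Suc m) else 0) + s * real k * real (Suc m) * G s k m"


locale cyc =
  fixes S :: "'a set" and \<sigma> :: "'a \<Rightarrow> 'a" and x :: 'a
  assumes fin: "finite S" and perm: "\<sigma> permutes S" and xS: "x \<in> S"
begin

abbreviation C where "C \<equiv> orbit \<sigma> x"
abbreviation k where "k \<equiv> card (orbit \<sigma> x)"

lemma p\<sigma>: "permutation \<sigma>" using permutes_imp_permutation[OF fin perm] .

lemma k_lp: "k = least_power \<sigma> x" using card_orbit_lp[OF p\<sigma>] .

lemma k_pos: "k > 0" using k_lp least_power_of_permutation(2)[OF p\<sigma>] by simp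

lemma k_id: "(\<sigma> ^^ k) x = x" using k_lp least_power_of_permutation(1)[OF p\<sigma>] by simp

lemma pe: "(\<sigma> ^^ a) x = (\<sigma> ^^ b) x \<longleftrightarrow> [a = b] (mod k)"
  using pow_eq_iff[OF p\<sigma>] k_lp by simp

lemma C_sub: "C \<subseteq> S" using permutes_orbit_subset[OF perm xS] .

lemma x_in_C: "x \<in> C" using permutation_self_in_orbit[OF p\<sigma>] .

lemma fin_C: "finite C" using C_sub fin finite_subset by blast

lemma C_mem: "z \<in> C \<longleftrightarrow> (\<exists>i. z = (\<sigma> ^^ i) x)"
  using orbit_range[OF p\<sigma>, of x] by auto

lemma C_pow: "(\<sigma> ^^ i) x \<in> C" using C_mem by blast

lemma C_cl: "\<forall>z\<in>C. \<sigma> z \<in> C" by (simp add: orbit.step)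

lemma C_k: "z \<in> C \<Longrightarrow> (\<sigma> ^^ k) z = z"
proof -
  assume "z \<in> C"
  then obtain i where i: "z = (\<sigma> ^^ i) x" using C_mem by blast
  have "(\<sigma> ^^ k) ((\<sigma> ^^ i) x) = (\<sigma> ^^ i) ((\<sigma> ^^ k) x)" by (rule funpow_comm)
  then show ?thesis using i k_id by simp
qed

lemma set_supp: "set (support \<sigma> x) = C"
  using support_set[OF p\<sigma>] orbit_range[OF p\<sigma>] by simp

lemma pr_cyc: "perm_restrict \<sigma> C = cycle_of_list (support \<sigma> x)"
proof
  fix z show "perm_restrict \<sigma> C z = cycle_of_list (support \<sigma> x) z"
  proof (cases "z \<in> C")
    case True then show ?thesis
      using cycle_restrict[OF p\<sigma>, of z x] set_supp by (simp add: perm_restrict_def)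
  next
    case False then show ?thesis
      using id_outside_supp[of z "support \<sigma> x"] set_supp by (simp add: perm_restrict_def)
  qed
qed

lemma pr_permutes: "perm_restrict \<sigma> C permutes C"
  using cycle_permutes[of "support \<sigma> x"] pr_cyc set_supp by simp

lemma pr_even: "evenperm (perm_restrict \<sigma> C) \<longleftrightarrow> odd k"
proof -
  have d: "distinct (support \<sigma> x)" using cycle_of_permutation[OF p\<sigma>] .
  have "length (support \<sigma> x) = k" using k_lp by simp
  moreover have "support \<sigma> x \<noteq> []" using k_pos k_lp by simp
  ultimately show ?thesis using evenperm_cycle[OF d] pr_cyc by simp
qed

definition h where "h = (k + 1) div 2"
definition \<rho>a where "\<rho>a = (perm_restrict \<sigma> C) ^^ h"

lemma \<rho>a_permutes: "\<rho>a permutes C"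
  unfolding \<rho>a_def using permutes_funpow[OF pr_permutes] .

lemma \<rho>a_even: "odd k \<Longrightarrow> evenperm \<rho>a"
  unfolding \<rho>a_def
  using evenperm_funpow[OF permutes_imp_permutation[OF fin_C pr_permutes]] pr_even by simp

lemma pr_pow: "z \<in> C \<Longrightarrow> (perm_restrict \<sigma> C ^^ m) z = (\<sigma> ^^ m) z"
proof (induction m)
  case (Suc m)
  have "(\<sigma> ^^ m) z \<in> C" using funpow_in_orbit[OF Suc.prems] .
  then show ?case using Suc by (simp add: perm_restrict_def)
qed simp

lemma \<rho>a_val: "z \<in> C \<Longrightarrow> \<rho>a z = (\<sigma> ^^ h) z"
  unfolding \<rho>a_def using pr_pow by simp

lemma \<rho>a_sq:
  assumes "odd k" "z \<in> C"
  shows "\<rho>a (\<rho>a z) = \<sigma> z"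
proof -
  have hz: "(\<sigma> ^^ h) z \<in> C" using funpow_in_orbit[OF assms(2)] .
  obtain m where "k = 2 * m + 1" using assms(1) by (rule oddE)
  then have "h + h = k + 1" unfolding h_def by simp
  then have "\<rho>a (\<rho>a z) = (\<sigma> ^^ (k + 1)) z"
    using \<rho>a_val[OF hz] \<rho>a_val[OF assms(2)] by (metis funpow_add comp_apply)
  also have "\<dots> = \<sigma> z" using C_k[OF assms(2)] by (simp add: funpow_swap1)
  finally show ?thesis .
qed

lemma Ra:
  "{\<tau> \<in> roots S \<sigma>. \<tau> x \<in> C} = (if odd k then {\<tau> \<in> roots S \<sigma>. \<forall>z\<in>C. \<tau> z = \<rho>a z} else {})"
proof -
  have main: "odd k \<and> (\<forall>z\<in>C. \<tau> z = \<rho>a z)" if A: "\<tau> \<in> roots S \<sigma>" and B: "\<tau> x \<in> C" for \<tau>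
  proof -
    have tt: "\<tau> \<circ> \<tau> = \<sigma>" using A unfolding roots_def by simp
    obtain j where j: "\<tau> x = (\<sigma> ^^ j) x" using B C_mem by blast
    have "\<sigma> x = \<tau> (\<tau> x)" using tt by (metis comp_apply)
    also have "\<dots> = (\<sigma> ^^ j) ((\<sigma> ^^ j) x)" using root_commute[OF tt, of j x] j by simp
    also have "\<dots> = (\<sigma> ^^ (j + j)) x" by (simp add: funpow_add)
    finally have "(\<sigma> ^^ 1) x = (\<sigma> ^^ (j + j)) x" by simp
    then have c1: "[1 = j + j] (mod k)" using pe by blast
    have ok: "odd k"
    proof (rule ccontr)
      assume "\<not> odd k"
      then have "[1 = j + j] (mod 2)" using cong_dvd_modulus_nat[OF c1] by auto
      then show False by (simp add: cong_def)
    qed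
    obtain m where m: "k = 2 * m + 1" using ok by (rule oddE)
    then have "h + h = k + 1" unfolding h_def by simp
    moreover have "(k + 1) mod k = 1 mod k" by (rule mod_add_self1)
    ultimately have "[h + h = 1] (mod k)" unfolding cong_def by simp
    then have "[2 * j = 2 * h] (mod k)" using c1 cong_sym cong_trans mult_2 by metis
    moreover have "coprime 2 k" using ok by simp
    ultimately have "[j = h] (mod k)" using cong_mult_lcancel_nat by blast
    then have jh: "\<tau> x = (\<sigma> ^^ h) x" using j pe by simp
    have "\<forall>z\<in>C. \<tau> z = \<rho>a z"
    proof
      fix z assume "z \<in> C"
      then obtain i where i: "z = (\<sigma> ^^ i) x" using C_mem by blast
      have "\<tau> z = (\<sigma> ^^ i) ((\<sigma> ^^ h) x)" using root_commute[OF tt] i jh by simp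
      also have "\<dots> = (\<sigma> ^^ h) z" using i funpow_comm by metis
      finally show "\<tau> z = \<rho>a z" using \<rho>a_val[OF \<open>z \<in> C\<close>] by simp
    qed
    then show ?thesis using ok by simp
  qed
  have bk: "\<tau> x \<in> C" if "\<forall>z\<in>C. \<tau> z = \<rho>a z" for \<tau>
    using that x_in_C permutes_in_image[OF \<rho>a_permutes] by simp
  show ?thesis using main bk by auto
qed

end

locale cyc2 = cyc +
  fixes y :: 'a
  assumes yS: "y \<in> S" and yC: "y \<notin> orbit \<sigma> x" and yk: "card (orbit \<sigma> y) = card (orbit \<sigma> x)"
begin

abbreviation D where "D \<equiv> orbit \<sigma> y"

lemma CD: "C \<inter> D = {}"
proof -
  have "D \<noteq> C" using yC permutation_self_in_orbit[OF p\<sigma>, of y] by auto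
  then show ?thesis using orb_disj[OF p\<sigma>] by blast
qed

lemma pe_y: "(\<sigma> ^^ a) y = (\<sigma> ^^ b) y \<longleftrightarrow> [a = b] (mod k)"
  using pow_eq_iff[OF p\<sigma>] card_orbit_lp[OF p\<sigma>, of y] yk by simp

lemma ky_id: "(\<sigma> ^^ k) y = y" using pe_y[of k 0] by (simp add: cong_def)

lemma D_mem: "z \<in> D \<longleftrightarrow> (\<exists>i. z = (\<sigma> ^^ i) y)"
  using orbit_range[OF p\<sigma>, of y] by auto

lemma D_sub: "D \<subseteq> S" using permutes_orbit_subset[OF perm yS] .

lemma CD_cl: "\<forall>z\<in>C \<union> D. \<sigma> z \<in> C \<union> D" by (auto intro: orbit.step)

definition L where
  "L = map (\<lambda>j. if even j then (\<sigma> ^^ (j div 2)) x else (\<sigma> ^^ (j div 2)) y) [0..<2*k]"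

lemma L_len: "length L = 2 * k" unfolding L_def by simp

lemma L_nth: "j < 2 * k \<Longrightarrow> L ! j = (if even j then (\<sigma> ^^ (j div 2)) x else (\<sigma> ^^ (j div 2)) y)"
  unfolding L_def by simp

lemma L_distinct: "distinct L"
proof -
  have "inj_on (\<lambda>j. if even j then (\<sigma> ^^ (j div 2)) x else (\<sigma> ^^ (j div 2)) y) {0..<2*k}"
  proof (rule inj_onI)
    fix a b assume a: "a \<in> {0..<2*k}" and b: "b \<in> {0..<2*k}"
      and eq: "(if even a then (\<sigma> ^^ (a div 2)) x else (\<sigma> ^^ (a div 2)) y) =
               (if even b then (\<sigma> ^^ (b div 2)) x else (\<sigma> ^^ (b div 2)) y)"
    have ak: "a div 2 < k" "b div 2 < k" using a b by auto
    have par: "even a = even b"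
    proof (rule ccontr)
      assume "even a \<noteq> even b"
      then have "(\<sigma> ^^ (a div 2)) x = (\<sigma> ^^ (b div 2)) y \<or> (\<sigma> ^^ (b div 2)) x = (\<sigma> ^^ (a div 2)) y"
        using eq by (auto split: if_splits)
      moreover have "(\<sigma> ^^ i) x \<in> C" "(\<sigma> ^^ i) y \<in> D" for i using C_pow D_mem by auto
      ultimately show False using CD by (metis disjoint_iff)
    qed
    have "[a div 2 = b div 2] (mod k)"
      using eq par pe pe_y by (auto split: if_splits)
    then have "a div 2 = b div 2" using cong_less_modulus_unique_nat ak by blast
    then show "a = b" using par by (metis div_mult_mod_eq mod2_eq_if)
  qed
  then show ?thesis unfolding L_def by (simp add: distinct_map)
qed

lemma L_set: "set L = C \<union> D"
proof
  show "set L \<subseteq> C \<union> D" unfolding L_def using C_pow D_mem by auto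
next
  show "C \<union> D \<subseteq> set L"
  proof
    fix z assume "z \<in> C \<union> D"
    then show "z \<in> set L"
    proof
      assume "z \<in> C"
      then obtain i where "z = (\<sigma> ^^ i) x" using C_mem by blast
      then have "z = (\<sigma> ^^ (i mod k)) x" using funpow_mod_eq[OF k_id] by simp
      moreover have "2 * (i mod k) < 2 * k" using k_pos by simp
      ultimately have "L ! (2 * (i mod k)) = z" using L_nth by simp
      then show ?thesis using \<open>2 * (i mod k) < 2 * k\<close> L_len by (metis nth_mem)
    next
      assume "z \<in> D"
      then obtain i where "z = (\<sigma> ^^ i) y" using D_mem by blast
      then have "z = (\<sigma> ^^ (i mod k)) y" using funpow_mod_eq[OF ky_id] by simp
      moreover have "2 * (i mod k) + 1 < 2 * k"
      proof -
        have "i mod k < k" using k_pos by simp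
        then show ?thesis by linarith
      qed
      ultimately have "L ! (2 * (i mod k) + 1) = z" using L_nth by simp
      then show ?thesis using \<open>2 * (i mod k) + 1 < 2 * k\<close> L_len by (metis nth_mem)
    qed
  qed
qed

definition \<rho>b where "\<rho>b = cycle_of_list L"

lemma \<rho>b_permutes: "\<rho>b permutes (C \<union> D)"
  unfolding \<rho>b_def using cycle_permutes[of L] L_set by simp

lemma \<rho>b_odd: "\<not> evenperm \<rho>b"
proof -
  have "L \<noteq> []" using L_len k_pos by auto
  then show ?thesis unfolding \<rho>b_def using evenperm_cycle[OF L_distinct] L_len by simp
qed

lemma \<rho>b_nth: "j < 2 * k \<Longrightarrow> \<rho>b (L ! j) = L ! ((1 + j) mod (2 * k))"
proof -
  assume j: "j < 2 * k"
  have "map \<rho>b L = rotate 1 L" unfolding \<rho>b_def using cyclic_rotation[OF L_distinct, of 1] by simp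
  then have "\<rho>b (L ! j) = rotate 1 L ! j" using j L_len by (metis nth_map)
  also have "\<dots> = L ! ((1 + j) mod (2 * k))" using nth_rotate[of j L 1] j L_len by simp
  finally show ?thesis .
qed

lemma \<rho>b_x: "\<rho>b ((\<sigma> ^^ i) x) = (\<sigma> ^^ i) y"
proof -
  let ?a = "i mod k"
  have a: "?a < k" using k_pos by simp
  have "(\<sigma> ^^ i) x = L ! (2 * ?a)" using L_nth[of "2 * ?a"] a funpow_mod_eq[OF k_id] by simp
  moreover have "(1 + 2 * ?a) mod (2 * k) = 2 * ?a + 1" using a by simp
  ultimately have "\<rho>b ((\<sigma> ^^ i) x) = L ! (2 * ?a + 1)" using \<rho>b_nth[of "2 * ?a"] a by simp
  also have "\<dots> = (\<sigma> ^^ ?a) y" using L_nth[of "2 * ?a + 1"] a by simp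
  also have "\<dots> = (\<sigma> ^^ i) y" using funpow_mod_eq[OF ky_id] by simp
  finally show ?thesis .
qed

lemma \<rho>b_y: "\<rho>b ((\<sigma> ^^ i) y) = (\<sigma> ^^ Suc i) x"
proof -
  let ?a = "i mod k"
  have a: "?a < k" using k_pos by simp
  have "(\<sigma> ^^ i) y = L ! (2 * ?a + 1)" using L_nth[of "2 * ?a + 1"] a funpow_mod_eq[OF ky_id] by simp
  moreover have "(1 + (2 * ?a + 1)) mod (2 * k) = 2 * ((?a + 1) mod k)"
    using mult_mod_right[of 2 "?a + 1" k] by simp
  moreover have "2 * ((?a + 1) mod k) < 2 * k" using k_pos by simp
  ultimately have "\<rho>b ((\<sigma> ^^ i) y) = L ! (2 * ((?a + 1) mod k))" using \<rho>b_nth[of "2 * ?a + 1"] a by simp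
  also have "\<dots> = (\<sigma> ^^ ((?a + 1) mod k)) x" using L_nth \<open>2 * ((?a + 1) mod k) < 2 * k\<close> by simp
  also have "\<dots> = (\<sigma> ^^ Suc i) x"
  proof -
    have "[(?a + 1) mod k = Suc i] (mod k)"
      by (simp add: cong_def mod_Suc_eq)
    then show ?thesis using pe by blast
  qed
  finally show ?thesis .
qed

lemma \<rho>b_sq: "z \<in> C \<union> D \<Longrightarrow> \<rho>b (\<rho>b z) = \<sigma> z"
proof -
  assume "z \<in> C \<union> D"
  then show ?thesis
  proof
    assume "z \<in> C"
    then obtain i where "z = (\<sigma> ^^ i) x" using C_mem by blast
    then show ?thesis using \<rho>b_x \<rho>b_y by simp
  next
    assume "z \<in> D"
    then obtain i where "z = (\<sigma> ^^ i) y" using D_mem by blast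
    then show ?thesis using \<rho>b_x \<rho>b_y by (simp del: funpow.simps) (simp)
  qed
qed

lemma Rb: "{\<tau> \<in> roots S \<sigma>. \<tau> x = y} = {\<tau> \<in> roots S \<sigma>. \<forall>z\<in>C \<union> D. \<tau> z = \<rho>b z}"
proof -
  have "\<forall>z\<in>C \<union> D. \<tau> z = \<rho>b z" if A: "\<tau> \<in> roots S \<sigma>" and B: "\<tau> x = y" for \<tau>
  proof
    have tt: "\<tau> \<circ> \<tau> = \<sigma>" using A unfolding roots_def by simp
    fix z assume "z \<in> C \<union> D"
    then show "\<tau> z = \<rho>b z"
    proof
      assume "z \<in> C"
      then obtain i where i: "z = (\<sigma> ^^ i) x" using C_mem by blast
      show ?thesis using root_commute[OF tt, of i x] B i \<rho>b_x by simp
    next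
      assume "z \<in> D"
      then obtain i where i: "z = (\<sigma> ^^ i) y" using D_mem by blast
      have "\<tau> z = \<tau> (\<tau> ((\<sigma> ^^ i) x))" using root_commute[OF tt, of i x] B i by simp
      also have "\<dots> = \<sigma> ((\<sigma> ^^ i) x)" using tt by (metis comp_apply)
      finally show ?thesis using i \<rho>b_y by simp
    qed
  qed
  moreover have "\<tau> x = y" if "\<forall>z\<in>C \<union> D. \<tau> z = \<rho>b z" for \<tau>
    using that x_in_C \<rho>b_x[of 0] by simp
  ultimately show ?thesis by blast
qed

end


context cyc
begin

lemma C_OS: "C \<in> OS S \<sigma> k" unfolding OS_mem using xS by blast

lemma OS_props: "Ob \<in> OS S \<sigma> j \<Longrightarrow> finite Ob \<and> card Ob = j \<and> Ob \<subseteq> S"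
proof -
  assume "Ob \<in> OS S \<sigma> j"
  then obtain z where z: "z \<in> S" "Ob = orbit \<sigma> z" "card Ob = j" unfolding OS_mem by blast
  then have "Ob \<subseteq> S" using permutes_orbit_subset[OF perm] by simp
  then show ?thesis using z fin finite_subset by blast
qed

lemma OS_avoid: "Ob \<in> OS S \<sigma> j \<Longrightarrow> Ob \<inter> orbit \<sigma> w = {} \<longleftrightarrow> Ob \<noteq> orbit \<sigma> w"
proof -
  assume "Ob \<in> OS S \<sigma> j"
  then obtain z where z: "Ob = orbit \<sigma> z" unfolding OS_mem by blast
  have "w \<in> orbit \<sigma> w" using permutation_self_in_orbit[OF p\<sigma>] .
  then show ?thesis using z orb_disj[OF p\<sigma>, of z w] by auto
qed

lemma ct_C: "ct (S - C) (perm_restrict \<sigma> (S - C)) j = ct S \<sigma> j - (if j = k then 1 else 0)"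
proof -
  have "OS (S - C) (perm_restrict \<sigma> (S - C)) j = OS S \<sigma> j - {C}"
    using OS_restr[OF fin perm C_cl, of j] OS_avoid[of _ j x] by auto
  moreover have "C \<in> OS S \<sigma> j \<longleftrightarrow> j = k" using C_OS OS_props by blast
  ultimately show ?thesis unfolding ct_def by (simp add: card_Diff_singleton_if)
qed

definition Y where "Y = {y \<in> S - C. card (orbit \<sigma> y) = k}"

lemma Y_char: "Y = \<Union>(OS S \<sigma> k - {C})"
proof
  show "Y \<subseteq> \<Union>(OS S \<sigma> k - {C})"
  proof
    fix y assume "y \<in> Y"
    then have y: "y \<in> S" "y \<notin> C" "card (orbit \<sigma> y) = k" unfolding Y_def by auto
    have "orbit \<sigma> y \<in> OS S \<sigma> k" unfolding OS_mem using y by blast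
    moreover have "y \<in> orbit \<sigma> y" using permutation_self_in_orbit[OF p\<sigma>] .
    ultimately show "y \<in> \<Union>(OS S \<sigma> k - {C})" using y(2) by blast
  qed
next
  show "\<Union>(OS S \<sigma> k - {C}) \<subseteq> Y"
  proof
    fix y assume "y \<in> \<Union>(OS S \<sigma> k - {C})"
    then obtain Ob where Ob: "Ob \<in> OS S \<sigma> k" "Ob \<noteq> C" "y \<in> Ob" by blast
    then obtain z where z: "z \<in> S" "Ob = orbit \<sigma> z" "card Ob = k" unfolding OS_mem by blast
    have e: "orbit \<sigma> y = Ob" using orb_eq[OF p\<sigma>] z(2) Ob(3) by simp
    have "y \<in> S" using OS_props[OF Ob(1)] Ob(3) by blast
    moreover have "y \<notin> C" using OS_avoid[OF Ob(1), of x] Ob by blast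
    ultimately show "y \<in> Y" unfolding Y_def using e z(3) by simp
  qed
qed

lemma card_Y: "card Y = k * (ct S \<sigma> k - 1)"
proof -
  have "card Y = sum card (OS S \<sigma> k - {C})"
    unfolding Y_char
  proof (rule card_Union_disjoint)
    show "pairwise disjnt (OS S \<sigma> k - {C})"
      unfolding pairwise_def disjnt_def
    proof (intro ballI impI)
      fix A B assume "A \<in> OS S \<sigma> k - {C}" "B \<in> OS S \<sigma> k - {C}" "A \<noteq> B"
      then have AB: "A \<in> OS S \<sigma> k" "B \<in> OS S \<sigma> k" "A \<noteq> B" by auto
      then obtain w where "B = orbit \<sigma> w" unfolding OS_mem by blast
      then show "A \<inter> B = {}" using OS_avoid[OF AB(1), of w] AB(3) by blast
    qed
    show "\<And>A. A \<in> OS S \<sigma> k - {C} \<Longrightarrow> finite A" using OS_props by blast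
  qed
  also have "\<dots> = sum (\<lambda>_. k) (OS S \<sigma> k - {C})"
    by (rule sum.cong) (use OS_props in auto)
  also have "\<dots> = k * card (OS S \<sigma> k - {C})" by simp
  also have "card (OS S \<sigma> k - {C}) = ct S \<sigma> k - 1"
    unfolding ct_def using C_OS by (simp add: card_Diff_singleton_if)
  finally show ?thesis .
qed

lemma root_out:
  assumes "\<tau> \<in> roots S \<sigma>" "\<tau> x \<notin> C"
  shows "\<tau> x \<in> Y"
proof -
  have tp: "\<tau> permutes S" and tt: "\<tau> \<circ> \<tau> = \<sigma>" using assms(1) unfolding roots_def by auto
  have "orbit \<sigma> (\<tau> x) = range (\<lambda>i. (\<sigma> ^^ i) (\<tau> x))" using orbit_range[OF p\<sigma>] .
  also have "\<dots> = range (\<lambda>i. \<tau> ((\<sigma> ^^ i) x))" using root_commute[OF tt] by simp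
  also have "\<dots> = \<tau> ` C" using orbit_range[OF p\<sigma>, of x] by (simp add: image_image)
  finally have "card (orbit \<sigma> (\<tau> x)) = k"
    using card_image[OF inj_on_subset[OF permutes_inj[OF tp]]] by simp
  moreover have "\<tau> x \<in> S" using permutes_in_image[OF tp] xS by simp
  ultimately show ?thesis unfolding Y_def using assms(2) by simp
qed

end

context cyc2
begin

lemma D_OS: "D \<in> OS S \<sigma> k" unfolding OS_mem using yS yk by blast

lemma CneD: "C \<noteq> D" using yC permutation_self_in_orbit[OF p\<sigma>, of y] by auto

lemma ct_CD: "ct (S - (C \<union> D)) (perm_restrict \<sigma> (S - (C \<union> D))) j = ct S \<sigma> j - (if j = k then 2 else 0)"
proof -
  have "OS (S - (C \<union> D)) (perm_restrict \<sigma> (S - (C \<union> D))) j = OS S \<sigma> j - {C, D}"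
  proof -
    have e: "(Ob \<inter> (C \<union> D) = {}) = (Ob \<noteq> C \<and> Ob \<noteq> D)" if "Ob \<in> OS S \<sigma> j" for Ob
    proof -
      have "(Ob \<inter> (C \<union> D) = {}) = (Ob \<inter> C = {} \<and> Ob \<inter> D = {})" by blast
      then show ?thesis using OS_avoid[OF that, of x] OS_avoid[OF that, of y] by simp
    qed
    have "{Ob \<in> OS S \<sigma> j. Ob \<inter> (C \<union> D) = {}} = OS S \<sigma> j - {C, D}"
    proof (intro set_eqI)
      fix Ob show "Ob \<in> {Ob \<in> OS S \<sigma> j. Ob \<inter> (C \<union> D) = {}} \<longleftrightarrow> Ob \<in> OS S \<sigma> j - {C, D}"
        using e[of Ob] by blast
    qed
    then show ?thesis using OS_restr[OF fin perm CD_cl, of j] by simp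
  qed
  moreover have "OS S \<sigma> j \<inter> {C, D} = (if j = k then {C, D} else {})"
  proof (cases "j = k")
    case True then show ?thesis using C_OS D_OS by auto
  next
    case False
    have "C \<notin> OS S \<sigma> j" "D \<notin> OS S \<sigma> j" using OS_props[of C j] OS_props[of D j] yk False by auto
    then have "OS S \<sigma> j \<inter> {C, D} = {}" by blast
    then show ?thesis using False by simp
  qed
  moreover have "card {C, D} = 2" using CneD by simp
  moreover have "card (OS S \<sigma> j - {C, D}) = card (OS S \<sigma> j) - card (OS S \<sigma> j \<inter> {C, D})"
    by (rule card_Diff_subset_Int) simp
  ultimately show ?thesis unfolding ct_def by simp
qed

end


lemma G_step:
  assumes "c \<ge> 1"
  shows "G s j c = (if odd j then G s j (c - 1) else 0) + s * real j * real (c - 1) * G s j (c - 2)"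
proof (cases c)
  case 0 then show ?thesis using assms by simp
next
  case (Suc m)
  then show ?thesis
  proof (cases m)
    case 0 then show ?thesis using Suc by simp
  next
    case (Suc m') then show ?thesis using \<open>c = Suc m\<close> by simp
  qed
qed

lemma main_perm:
  assumes "finite S" "\<sigma> permutes S" "s * s = 1" "card S \<le> N"
  shows "Rw s S \<sigma> = (\<Prod>i\<in>{1..N}. G s i (ct S \<sigma> i))"
  using assms
proof (induction "card S" arbitrary: S \<sigma> rule: less_induct)
  case less
  note fin = less.prems(1) and perm = less.prems(2) and s = less.prems(3) and N = less.prems(4)
  show ?case
  proof (cases "S = {}")
    case True
    then have "\<sigma> = id" using perm by simp
    have "roots S \<sigma> = {id}" unfolding roots_def using True \<open>\<sigma> = id\<close> by auto
    then have "Rw s S \<sigma> = 1" unfolding Rw_def wt_def by simp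
    moreover have "ct S \<sigma> i = 0" for i unfolding ct_def OS_def using True by simp
    ultimately show ?thesis by simp
  next
    case False
    then obtain x where xS: "x \<in> S" by blast
    interpret cyc S \<sigma> x using fin perm xS by unfold_locales
    let ?c = "ct S \<sigma>"
    have k1: "1 \<le> k" using k_pos by simp
    have kN: "k \<le> N" using card_mono[OF fin C_sub] N by simp
    have ck: "?c k \<ge> 1"
    proof -
      have "finite (OS S \<sigma> k)" using finite_OS[OF fin] .
      then show ?thesis unfolding ct_def using C_OS card_0_eq[of "OS S \<sigma> k"] by fastforce
    qed
    define Rest where "Rest = (\<Prod>i\<in>{1..N} - {k}. G s i (?c i))"
    have kin: "k \<in> {1..N}" using k1 kN by simp
    have P: "(\<Prod>i\<in>{1..N}. G s i (?c i)) = G s k (?c k) * Rest"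
      unfolding Rest_def using prod.remove[OF _ kin] by simp
    let ?\<sigma>1 = "perm_restrict \<sigma> (S - C)"
    have p1: "?\<sigma>1 permutes (S - C)"
      using restr_permutes[OF perm C_sub closed_image[OF fin_C perm C_cl]] .
    have card1: "card (S - C) < card S"
    proof -
      have "S - C \<subset> S" using xS x_in_C by blast
      then show ?thesis by (rule psubset_card_mono[OF fin])
    qed
    have IH1: "Rw s (S - C) ?\<sigma>1 = (\<Prod>i\<in>{1..N}. G s i (ct (S - C) ?\<sigma>1 i))"
      using less.hyps[OF card1] fin p1 s N card1 by simp
    have P1: "(\<Prod>i\<in>{1..N}. G s i (ct (S - C) ?\<sigma>1 i)) = G s k (?c k - 1) * Rest"
    proof -
      have "(\<Prod>i\<in>{1..N}. G s i (ct (S - C) ?\<sigma>1 i)) = G s k (ct (S - C) ?\<sigma>1 k) * (\<Prod>i\<in>{1..N} - {k}. G s i (ct (S - C) ?\<sigma>1 i))"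
        using prod.remove[OF _ kin] by simp
      moreover have "(\<Prod>i\<in>{1..N} - {k}. G s i (ct (S - C) ?\<sigma>1 i)) = Rest"
        unfolding Rest_def by (rule prod.cong) (simp_all add: ct_C)
      ultimately show ?thesis using ct_C by simp
    qed
    have sumA: "(\<Sum>\<tau>\<in>{\<tau> \<in> roots S \<sigma>. \<tau> x \<in> C}. wt s \<tau>) = (if odd k then G s k (?c k - 1) * Rest else 0)"
    proof (cases "odd k")
      case True
      have "(\<Sum>\<tau>\<in>{\<tau> \<in> roots S \<sigma>. \<tau> x \<in> C}. wt s \<tau>) = (\<Sum>\<tau>\<in>{\<tau> \<in> roots S \<sigma>. \<forall>z\<in>C. \<tau> z = \<rho>a z}. wt s \<tau>)"
        using Ra True by simp
      also have "\<dots> = wt s \<rho>a * Rw s (S - C) ?\<sigma>1"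
        by (rule split_sum[OF fin perm C_sub C_cl \<rho>a_permutes]) (use \<rho>a_sq True s in auto)
      also have "\<dots> = G s k (?c k - 1) * Rest" using \<rho>a_even[OF True] IH1 P1 by (simp add: wt_def)
      finally show ?thesis using True by simp
    next
      case False
      then have e: "{\<tau> \<in> roots S \<sigma>. \<tau> x \<in> C} = {}" using Ra by simp
      have "(\<Sum>\<tau>\<in>{\<tau> \<in> roots S \<sigma>. \<tau> x \<in> C}. wt s \<tau>) = 0" by (simp only: e sum.empty)
      then show ?thesis using False by simp
    qed
    have P2: "(\<Sum>\<tau>\<in>{\<tau> \<in> roots S \<sigma>. \<tau> x = y}. wt s \<tau>) = s * (G s k (?c k - 2) * Rest)" if yY: "y \<in> Y" for y
    proof -
      have y: "y \<in> S" "y \<notin> C" "card (orbit \<sigma> y) = k" using yY unfolding Y_def by auto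
      interpret cyc2 S \<sigma> x y using y by unfold_locales
      let ?\<sigma>2 = "perm_restrict \<sigma> (S - (C \<union> D))"
      have CDS: "C \<union> D \<subseteq> S" using C_sub D_sub by simp
      have finCD: "finite (C \<union> D)" using CDS fin finite_subset by blast
      have p2: "?\<sigma>2 permutes (S - (C \<union> D))"
        using restr_permutes[OF perm CDS closed_image[OF finCD perm CD_cl]] .
      have card2: "card (S - (C \<union> D)) < card S"
      proof -
        have "S - (C \<union> D) \<subset> S" using xS x_in_C by blast
        then show ?thesis by (rule psubset_card_mono[OF fin])
      qed
      have IH2: "Rw s (S - (C \<union> D)) ?\<sigma>2 = (\<Prod>i\<in>{1..N}. G s i (ct (S - (C \<union> D)) ?\<sigma>2 i))"
        using less.hyps[OF card2] fin p2 s N card2 by simp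
      have PP2: "(\<Prod>i\<in>{1..N}. G s i (ct (S - (C \<union> D)) ?\<sigma>2 i)) = G s k (?c k - 2) * Rest"
      proof -
        have "(\<Prod>i\<in>{1..N}. G s i (ct (S - (C \<union> D)) ?\<sigma>2 i)) = G s k (ct (S - (C \<union> D)) ?\<sigma>2 k) * (\<Prod>i\<in>{1..N} - {k}. G s i (ct (S - (C \<union> D)) ?\<sigma>2 i))"
          using prod.remove[OF _ kin] by simp
        moreover have "(\<Prod>i\<in>{1..N} - {k}. G s i (ct (S - (C \<union> D)) ?\<sigma>2 i)) = Rest"
          unfolding Rest_def by (rule prod.cong) (simp_all add: ct_CD)
        ultimately show ?thesis using ct_CD by simp
      qed
      have "(\<Sum>\<tau>\<in>{\<tau> \<in> roots S \<sigma>. \<tau> x = y}. wt s \<tau>) = (\<Sum>\<tau>\<in>{\<tau> \<in> roots S \<sigma>. \<forall>z\<in>C \<union> D. \<tau> z = \<rho>b z}. wt s \<tau>)"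
        using Rb by simp
      also have "\<dots> = wt s \<rho>b * Rw s (S - (C \<union> D)) ?\<sigma>2"
        by (rule split_sum[OF fin perm CDS CD_cl \<rho>b_permutes]) (use \<rho>b_sq s in auto)
      also have "\<dots> = s * (G s k (?c k - 2) * Rest)" using \<rho>b_odd IH2 PP2 by (simp add: wt_def)
      finally show ?thesis .
    qed
    have finR: "finite (roots S \<sigma>)" using finite_roots[OF fin] .
    have finY: "finite Y" unfolding Y_def using fin by simp
    have "Rw s S \<sigma> = (\<Sum>\<tau>\<in>roots S \<sigma> \<inter> {\<tau>. \<tau> x \<in> C}. wt s \<tau>) + (\<Sum>\<tau>\<in>roots S \<sigma> - {\<tau>. \<tau> x \<in> C}. wt s \<tau>)"
      unfolding Rw_def using sum.Int_Diff[OF finR] by blast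
    also have "roots S \<sigma> \<inter> {\<tau>. \<tau> x \<in> C} = {\<tau> \<in> roots S \<sigma>. \<tau> x \<in> C}" by blast
    also have "(\<Sum>\<tau>\<in>roots S \<sigma> - {\<tau>. \<tau> x \<in> C}. wt s \<tau>)
        = (\<Sum>y\<in>Y. \<Sum>\<tau>\<in>{\<tau> \<in> roots S \<sigma> - {\<tau>. \<tau> x \<in> C}. \<tau> x = y}. wt s \<tau>)"
      by (rule sum.group[symmetric]) (use finR finY root_out in auto)
    also have "\<dots> = (\<Sum>y\<in>Y. s * (G s k (?c k - 2) * Rest))"
    proof (rule sum.cong[OF refl])
      fix y assume yY: "y \<in> Y"
      then have "y \<notin> C" unfolding Y_def by simp
      then have "{\<tau> \<in> roots S \<sigma> - {\<tau>. \<tau> x \<in> C}. \<tau> x = y} = {\<tau> \<in> roots S \<sigma>. \<tau> x = y}" by auto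
      then show "(\<Sum>\<tau>\<in>{\<tau> \<in> roots S \<sigma> - {\<tau>. \<tau> x \<in> C}. \<tau> x = y}. wt s \<tau>) = s * (G s k (?c k - 2) * Rest)"
        using P2[OF yY] by simp
    qed
    also have "\<dots> = real k * real (?c k - 1) * s * (G s k (?c k - 2) * Rest)"
      using card_Y by simp
    finally have R: "Rw s S \<sigma> = (if odd k then G s k (?c k - 1) * Rest else 0)
        + real k * real (?c k - 1) * s * (G s k (?c k - 2) * Rest)"
      using sumA by simp
    show ?thesis unfolding P R using G_step[OF ck, of s k] by (simp add: algebra_simps)
  qed
qed


definition fsupp :: "(nat \<Rightarrow> nat) \<Rightarrow> bool" where "fsupp m = finite {i. m i \<noteq> 0}"
definition supp :: "(nat \<Rightarrow> nat) \<Rightarrow> nat set" where "supp m = {i. m i \<noteq> 0}"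
definition Dec :: "(nat \<Rightarrow> nat) \<Rightarrow> ((nat \<Rightarrow> nat) \<times> (nat \<Rightarrow> nat)) set" where
  "Dec m = {(a, b). \<forall>i. a i + b i = m i}"
definition mon :: "nat \<Rightarrow> nat \<Rightarrow> nat \<Rightarrow> nat" where "mon d i = (\<lambda>j. if j = i then d else 0)"
definition msub :: "(nat \<Rightarrow> nat) \<Rightarrow> (nat \<Rightarrow> nat) \<Rightarrow> nat \<Rightarrow> nat" where "msub m a = (\<lambda>j. m j - a j)"

lemma mmul_Dec: "mmul f g m = (\<Sum>(a, b)\<in>Dec m. f a * g b)"
  unfolding mmul_def Dec_def by simp

lemma mdeg_U:
  assumes "finite U" "supp m \<subseteq> U"
  shows "mdeg m = (\<Sum>j\<in>U. m j)"
  unfolding mdeg_def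
  by (rule sum.mono_neutral_left) (use assms in \<open>auto simp: supp_def\<close>)

lemma fsupp_supp: "fsupp m \<Longrightarrow> finite (supp m)" unfolding fsupp_def supp_def by simp

lemma le_mdeg: "fsupp m \<Longrightarrow> m i \<le> mdeg m"
proof (cases "m i = 0")
  case False
  assume f: "fsupp m"
  have "i \<in> {i. m i \<noteq> 0}" using False by simp
  then show ?thesis unfolding mdeg_def
    using member_le_sum[of i "{i. m i \<noteq> 0}" m] f unfolding fsupp_def by simp
qed simp

lemma finite_Dec:
  assumes "fsupp m"
  shows "finite (Dec m)"
proof -
  let ?B = "{f. \<forall>x. (x \<in> supp m \<longrightarrow> f x \<in> {..mdeg m}) \<and> (x \<notin> supp m \<longrightarrow> f x = 0)}"
  have fB: "finite ?B"
    by (rule finite_set_of_finite_funs) (use assms fsupp_supp in auto)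
  have "Dec m \<subseteq> ?B \<times> ?B"
  proof
    fix p assume "p \<in> Dec m"
    then obtain a b where p: "p = (a, b)" "\<forall>i. a i + b i = m i" unfolding Dec_def by auto
    have "a i \<le> mdeg m \<and> b i \<le> mdeg m" for i
    proof -
      have "a i + b i = m i" using p(2) by blast
      then show ?thesis using le_mdeg[OF assms, of i] by linarith
    qed
    moreover have "a i = 0 \<and> b i = 0" if "i \<notin> supp m" for i
    proof -
      have "a i + b i = m i" using p(2) by blast
      moreover have "m i = 0" using that unfolding supp_def by simp
      ultimately show ?thesis by simp
    qed
    ultimately show "p \<in> ?B \<times> ?B" using p(1) by auto
  qed
  then show ?thesis using fB finite_subset by blast
qed

lemma Dec_fsupp:
  assumes "(a, b) \<in> Dec m" "fsupp m"
  shows "fsupp a" "fsupp b" "supp a \<subseteq> supp m" "supp b \<subseteq> supp m"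
proof -
  have e: "\<forall>i. a i + b i = m i" using assms(1) unfolding Dec_def by auto
  show sa: "supp a \<subseteq> supp m" "supp b \<subseteq> supp m" unfolding supp_def
  proof -
    show "{i. a i \<noteq> 0} \<subseteq> {i. m i \<noteq> 0}"
    proof
      fix i assume "i \<in> {i. a i \<noteq> 0}" then show "i \<in> {i. m i \<noteq> 0}" using e[rule_format, of i] by simp
    qed
    show "{i. b i \<noteq> 0} \<subseteq> {i. m i \<noteq> 0}"
    proof
      fix i assume "i \<in> {i. b i \<noteq> 0}" then show "i \<in> {i. m i \<noteq> 0}" using e[rule_format, of i] by simp
    qed
  qed
  show "fsupp a" "fsupp b" using sa fsupp_supp[OF assms(2)] finite_subset unfolding fsupp_def supp_def by blast+
qed

lemma mon_eq:
  assumes "d \<ge> 1" shows "mon d i = mon d i' \<longleftrightarrow> i = i'"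
proof
  assume "mon d i = mon d i'"
  then have "mon d i i = mon d i' i" by simp
  then show "i = i'" using assms by (auto simp: mon_def split: if_splits)
qed simp

lemma fsupp_msub: "fsupp m \<Longrightarrow> fsupp (msub m a)"
  unfolding fsupp_def msub_def by (rule finite_subset[of _ "{i. m i \<noteq> 0}"]) auto

lemma DEC:
  assumes d: "d \<ge> 1" and H1: "\<And>i. F (mon d i) = \<alpha> i"
    and H2: "\<And>a. fsupp a \<Longrightarrow> (\<forall>i. a \<noteq> mon d i) \<Longrightarrow> F a = 0"
    and m: "fsupp m"
  shows "mmul F H m = (\<Sum>i\<in>{i. d \<le> m i}. \<alpha> i * H (msub m (mon d i)))"
proof -
  let ?g = "\<lambda>i. (mon d i, msub m (mon d i))"
  have "mmul F H m = (\<Sum>p\<in>Dec m. F (fst p) * H (snd p))"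
    unfolding mmul_Dec by (simp add: case_prod_beta)
  also have "\<dots> = (\<Sum>p\<in>?g ` {i. d \<le> m i}. F (fst p) * H (snd p))"
  proof (rule sum.mono_neutral_right[OF finite_Dec[OF m]])
    show "?g ` {i. d \<le> m i} \<subseteq> Dec m"
      unfolding Dec_def mon_def msub_def by auto
    show "\<forall>p\<in>Dec m - ?g ` {i. d \<le> m i}. F (fst p) * H (snd p) = 0"
    proof
      fix p assume p: "p \<in> Dec m - ?g ` {i. d \<le> m i}"
      obtain a b where ab: "p = (a, b)" by fastforce
      have abD: "(a, b) \<in> Dec m" using p ab by simp
      have "\<forall>i. a \<noteq> mon d i"
      proof
        fix i show "a \<noteq> mon d i"
        proof
          assume a: "a = mon d i"
          have e: "\<forall>j. a j + b j = m j" using abD unfolding Dec_def by auto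
          have "a i + b i = m i" using e by blast
          then have "d \<le> m i" using a unfolding mon_def by simp
          moreover have "b = msub m (mon d i)"
          proof
            fix j have "a j + b j = m j" using e by blast
            then show "b j = msub m (mon d i) j" using a unfolding msub_def by simp
          qed
          ultimately show False using p ab a by auto
        qed
      qed
      then show "F (fst p) * H (snd p) = 0" using H2[OF Dec_fsupp(1)[OF abD m]] ab by simp
    qed
  qed
  also have "\<dots> = (\<Sum>i\<in>{i. d \<le> m i}. F (mon d i) * H (msub m (mon d i)))"
    by (subst sum.reindex) (auto simp: inj_on_def mon_eq[OF d])
  finally show ?thesis using H1 by simp
qed


lemma sum_div_nat:
  fixes f :: "'a \<Rightarrow> nat"
  assumes "d > 0" "\<forall>i\<in>A. d dvd f i"
  shows "(\<Sum>i\<in>A. f i div d) = (\<Sum>i\<in>A. f i) div d"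
proof -
  have "(\<Sum>i\<in>A. f i) = (\<Sum>i\<in>A. d * (f i div d))"
    by (rule sum.cong) (use assms in auto)
  also have "\<dots> = d * (\<Sum>i\<in>A. f i div d)" by (simp add: sum_distrib_left)
  finally show ?thesis using assms(1) by simp
qed

lemma aux_frac: "(r::real) \<noteq> 0 \<Longrightarrow> f \<noteq> 0 \<Longrightarrow> a * (a ^ q / f) = a ^ Suc q / (r * f) * r"
  by (simp add: field_simps)

lemma aux_mul: "(a::real) * u' = u * r \<Longrightarrow> a * (u' * P) = (u * P) * r"
  by (metis mult.assoc mult.commute)

locale msr =
  fixes F :: mser and \<alpha> :: "nat \<Rightarrow> real" and d :: nat
  assumes d: "d \<ge> 1" and H1: "\<And>i. F (mon d i) = \<alpha> i"
    and H2: "\<And>a. fsupp a \<Longrightarrow> (\<forall>i. a \<noteq> mon d i) \<Longrightarrow> F a = 0"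
begin

definition PU :: "nat set \<Rightarrow> (nat \<Rightarrow> nat) \<Rightarrow> real" where
  "PU U m = (\<Prod>j\<in>U. \<alpha> j ^ (m j div d) / fact (m j div d))"

definition T :: "nat \<Rightarrow> (nat \<Rightarrow> nat) \<Rightarrow> real" where
  "T k m = (if (\<forall>i. d dvd m i) \<and> mdeg m = d * k then PU (supp m) m else 0)"

lemma PU_U:
  assumes "finite U" "supp m \<subseteq> U"
  shows "PU (supp m) m = PU U m"
  unfolding PU_def
  by (rule prod.mono_neutral_left) (use assms in \<open>auto simp: supp_def\<close>)

lemma supp_msub: "supp (msub m a) \<subseteq> supp m"
  unfolding supp_def msub_def by auto

lemma mdeg_sub:
  assumes m: "fsupp m" and i: "d \<le> m i"
  shows "mdeg (msub m (mon d i)) + d = mdeg m"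
proof -
  let ?U = "supp m"
  have fU: "finite ?U" using fsupp_supp[OF m] .
  have iU: "i \<in> ?U" using i d unfolding supp_def by simp
  have "mdeg (msub m (mon d i)) = (\<Sum>j\<in>?U. msub m (mon d i) j)"
    using mdeg_U[OF fU supp_msub] .
  also have "\<dots> = msub m (mon d i) i + (\<Sum>j\<in>?U - {i}. msub m (mon d i) j)"
    using sum.remove[OF fU iU] by simp
  also have "(\<Sum>j\<in>?U - {i}. msub m (mon d i) j) = (\<Sum>j\<in>?U - {i}. m j)"
    by (rule sum.cong) (auto simp: msub_def mon_def)
  finally have "mdeg (msub m (mon d i)) = (m i - d) + (\<Sum>j\<in>?U - {i}. m j)"
    by (simp add: msub_def mon_def)
  moreover have "mdeg m = m i + (\<Sum>j\<in>?U - {i}. m j)"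
    using mdeg_U[OF fU subset_refl] sum.remove[OF fU iU] by simp
  ultimately show ?thesis using i by simp
qed

lemma PU_sub:
  assumes m: "fsupp m" and i: "d \<le> m i" and dv: "d dvd m i"
  shows "\<alpha> i * PU (supp m) (msub m (mon d i)) = PU (supp m) m * real (m i div d)"
proof -
  let ?U = "supp m"
  let ?f = "\<lambda>m j. \<alpha> j ^ (m j div d) / fact (m j div d)"
  have fU: "finite ?U" using fsupp_supp[OF m] .
  have iU: "i \<in> ?U" using i d unfolding supp_def by simp
  obtain q where q: "m i = d * q" using dv by blast
  obtain q' where q': "q = Suc q'" using q i d by (cases q) auto
  have mi: "m i div d = Suc q'" using q q' d by simp
  have mi': "(m i - d) div d = q'" using q q' d by (simp add: diff_mult_distrib2[symmetric])
  have rest: "(\<Prod>j\<in>?U - {i}. ?f (msub m (mon d i)) j) = (\<Prod>j\<in>?U - {i}. ?f m j)"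
    by (rule prod.cong) (auto simp: msub_def mon_def)
  have "PU ?U (msub m (mon d i)) = ?f (msub m (mon d i)) i * (\<Prod>j\<in>?U - {i}. ?f (msub m (mon d i)) j)"
    unfolding PU_def by (rule prod.remove[OF fU iU])
  then have A: "PU ?U (msub m (mon d i)) = ?f (msub m (mon d i)) i * (\<Prod>j\<in>?U - {i}. ?f m j)"
    using rest by simp
  have B: "PU ?U m = ?f m i * (\<Prod>j\<in>?U - {i}. ?f m j)"
    unfolding PU_def by (rule prod.remove[OF fU iU])
  have C: "\<alpha> i * ?f (msub m (mon d i)) i = ?f m i * real (m i div d)"
  proof -
    have e1: "msub m (mon d i) i div d = q'" using mi' by (simp add: msub_def mon_def)
    have p: "real (Suc q') \<noteq> 0" "(fact q' :: real) \<noteq> 0" by auto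
    have "\<alpha> i * (\<alpha> i ^ q' / fact q') = \<alpha> i ^ Suc q' / (real (Suc q') * fact q') * real (Suc q')"
      using aux_frac[OF p] .
    then have "\<alpha> i * (\<alpha> i ^ q' / fact q') = \<alpha> i ^ Suc q' / fact (Suc q') * real (Suc q')"
      by (simp only: fact_Suc of_nat_mult)
    then show ?thesis using mi e1 by simp
  qed
  show ?thesis unfolding A B using aux_mul[OF C] .
qed

lemma mpow_Suc: "mpow F (Suc k) m = mmul F (mpow F k) m"
  unfolding mpow_def by simp

lemma MP: "fsupp m \<Longrightarrow> mpow F k m = fact k * T k m"
proof (induction k arbitrary: m)
  case 0
  show ?case
  proof (cases "m = (\<lambda>_. 0)")
    case True
    then have "mdeg m = 0" "supp m = {}" unfolding mdeg_def supp_def by simp_all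
    then show ?thesis using True unfolding mpow_def mone_def T_def PU_def by simp
  next
    case False
    then obtain i where "m i \<noteq> 0" by auto
    then have "mdeg m \<noteq> 0" using le_mdeg[OF "0.prems", of i] by simp
    then show ?thesis using False unfolding mpow_def mone_def T_def by simp
  qed
next
  case (Suc k)
  note m = Suc.prems
  let ?I = "{i. d \<le> m i}"
  have "mpow F (Suc k) m = (\<Sum>i\<in>?I. \<alpha> i * mpow F k (msub m (mon d i)))"
    unfolding mpow_Suc by (rule DEC[where F=F and \<alpha>=\<alpha> and d=d, OF d H1 H2 m])
  also have "\<dots> = (\<Sum>i\<in>?I. \<alpha> i * (fact k * T k (msub m (mon d i))))"
    using Suc.IH[OF fsupp_msub[OF m]] by simp
  finally have st: "mpow F (Suc k) m = (\<Sum>i\<in>?I. \<alpha> i * (fact k * T k (msub m (mon d i))))" .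
  show ?case
  proof (cases "\<forall>i. d dvd m i")
    case False
    then obtain i0 where i0: "\<not> d dvd m i0" by blast
    have "T k (msub m (mon d i)) = 0" if "i \<in> ?I" for i
    proof -
      have "\<not> d dvd msub m (mon d i) i0"
      proof (cases "i0 = i")
        case True
        have di: "d \<le> m i" using that by simp
        show ?thesis
        proof
          assume "d dvd msub m (mon d i) i0"
          then have "d dvd m i - d" using True by (simp add: msub_def mon_def)
          then have "d dvd (m i - d) + d" by simp
          then show False using i0 True di by simp
        qed
      next
        case False then show ?thesis using i0 by (simp add: msub_def mon_def)
      qed
      then show ?thesis unfolding T_def by auto
    qed
    then have "mpow F (Suc k) m = 0" using st by simp
    then show ?thesis using False unfolding T_def by auto
  next
    case True
    note dv = True
    show ?thesis
    proof (cases "mdeg m = d * Suc k")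
      case False
      have "T k (msub m (mon d i)) = 0" if "i \<in> ?I" for i
      proof -
        have "mdeg (msub m (mon d i)) + d = mdeg m" using mdeg_sub[OF m] that by simp
        then have "mdeg (msub m (mon d i)) \<noteq> d * k" using False by auto
        then show ?thesis unfolding T_def by auto
      qed
      then show ?thesis using st False unfolding T_def by simp
    next
      case True
      note dg = True
      have IU: "?I = supp m"
      proof
        show "?I \<subseteq> supp m" using d unfolding supp_def by auto
        show "supp m \<subseteq> ?I"
        proof
          fix i assume "i \<in> supp m"
          then have "m i \<noteq> 0" unfolding supp_def by simp
          moreover have "d dvd m i" using dv by blast
          ultimately show "i \<in> ?I" by (simp add: dvd_imp_le)
        qed
      qed
      have trm: "\<alpha> i * (fact k * T k (msub m (mon d i))) = fact k * (PU (supp m) m * real (m i div d))"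
        if "i \<in> ?I" for i
      proof -
        have di: "d \<le> m i" using that by simp
        have "mdeg (msub m (mon d i)) + d = mdeg m" using mdeg_sub[OF m di] .
        then have dg': "mdeg (msub m (mon d i)) = d * k" using dg by simp
        have dv': "\<forall>j. d dvd msub m (mon d i) j"
          using dv by (auto simp: msub_def mon_def)
        have "T k (msub m (mon d i)) = PU (supp m) (msub m (mon d i))"
          unfolding T_def using dg' dv' PU_U[OF fsupp_supp[OF m] supp_msub] by simp
        then show ?thesis using PU_sub[OF m di] dv by (simp add: algebra_simps)
      qed
      have "mpow F (Suc k) m = (\<Sum>i\<in>?I. fact k * (PU (supp m) m * real (m i div d)))"
        unfolding st by (rule sum.cong[OF refl trm])
      also have "\<dots> = (\<Sum>i\<in>supp m. fact k * (PU (supp m) m * real (m i div d)))"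
        unfolding IU ..
      also have "\<dots> = fact k * PU (supp m) m * real (\<Sum>i\<in>supp m. m i div d)"
        by (simp add: sum_distrib_left algebra_simps)
      also have "(\<Sum>i\<in>supp m. m i div d) = Suc k"
      proof -
        have "(\<Sum>i\<in>supp m. m i div d) = (\<Sum>i\<in>supp m. m i) div d"
          using sum_div_nat[of d "supp m" m] d dv by simp
        also have "(\<Sum>i\<in>supp m. m i) = mdeg m" unfolding mdeg_def supp_def by simp
        finally show ?thesis using dg d by simp
      qed
      finally show ?thesis using dv dg unfolding T_def by simp
    qed
  qed
qed

lemma EXP:
  assumes m: "fsupp m"
  shows "mexp F m = (if \<forall>i. d dvd m i then PU (supp m) m else 0)"
proof -
  have "mexp F m = (\<Sum>k\<le>mdeg m. T k m)"
    unfolding mexp_def using MP[OF m] by simp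
  also have "\<dots> = (if \<forall>i. d dvd m i then PU (supp m) m else 0)"
  proof (cases "\<forall>i. d dvd m i")
    case True
    have "d dvd mdeg m" unfolding mdeg_def using True by (simp add: dvd_sum)
    then obtain k0 where k0: "mdeg m = d * k0" by blast
    have k0le: "k0 \<le> mdeg m" using k0 d by simp
    have "T k m = (if k = k0 then PU (supp m) m else 0)" for k
      unfolding T_def using True k0 d by auto
    then have "(\<Sum>k\<le>mdeg m. T k m) = (\<Sum>k\<le>mdeg m. if k = k0 then PU (supp m) m else 0)" by simp
    also have "\<dots> = PU (supp m) m" using k0le by (simp add: sum.delta)
    finally show ?thesis using True by simp
  next
    case False
    have "T k m = 0" for k using False unfolding T_def by auto
    then show ?thesis using False by auto
  qed
  finally show ?thesis .
qed

end


lemma single_sum: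
  assumes "\<And>j. j \<noteq> j0 \<Longrightarrow> g j = (0::real)"
  shows "(\<Sum>j\<in>{j. g j \<noteq> 0}. g j) = g j0"
proof (cases "g j0 = 0")
  case True
  have "g j = 0" for j using True assms by (cases "j = j0") auto
  then show ?thesis using True by simp
next
  case False
  then have "{j. g j \<noteq> 0} = {j0}" using assms by auto
  then show ?thesis by simp
qed

lemma mon_fsupp: "fsupp (mon d i)" unfolding fsupp_def mon_def
  by (rule finite_subset[of _ "{i}"]) auto

lemma mvar_mon: "mvar i m = (if m = mon 1 i then 1 else 0)"
  unfolding mvar_def mon_def by simp

lemma mvar_msr: "msr (mvar i) (\<lambda>j. if j = i then 1 else 0) 1"
  by unfold_locales (auto simp: mvar_mon mon_eq)

lemma supp_mon: "d \<ge> 1 \<Longrightarrow> supp (mon d i) = {i}" unfolding supp_def mon_def by auto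

lemma mvar2:
  assumes m: "fsupp m"
  shows "mpow (mvar i) 2 m = (if m = mon 2 i then 1 else 0)"
proof -
  interpret msr "mvar i" "\<lambda>j. if j = i then 1 else 0" 1 by (rule mvar_msr)
  have mp: "mpow (mvar i) 2 m = 2 * T 2 m" using MP[OF m, of 2] by simp
  show ?thesis
  proof (cases "m = mon 2 i")
    case True
    have "mdeg m = 2" using mdeg_U[of "{i}" "mon 2 i"] supp_mon[of 2 i] True by (simp add: mon_def)
    moreover have "supp m = {i}" using True supp_mon[of 2 i] by simp
    ultimately have "T 2 m = 1 / 2" unfolding T_def PU_def using True by (simp add: mon_def)
    then show ?thesis using mp True by simp
  next
    case False
    show ?thesis
    proof (cases "mdeg m = 2")
      case False
      then show ?thesis using mp \<open>m \<noteq> mon 2 i\<close> unfolding T_def by simp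
    next
      case True
      have "\<exists>j\<in>supp m. j \<noteq> i"
      proof (rule ccontr)
        assume "\<not> (\<exists>j\<in>supp m. j \<noteq> i)"
        then have sub: "supp m \<subseteq> {i}" by blast
        then have "mdeg m = m i" using mdeg_U[of "{i}" m] by simp
        then have "m = mon 2 i" using True sub unfolding mon_def supp_def by (auto simp: fun_eq_iff)
        then show False using \<open>m \<noteq> mon 2 i\<close> by simp
      qed
      then obtain j where j: "j \<in> supp m" "j \<noteq> i" by blast
      have "PU (supp m) m = 0" unfolding PU_def
        by (rule prod_zero) (use j fsupp_supp[OF m] in \<open>auto simp: supp_def\<close>)
      then show ?thesis using mp \<open>m \<noteq> mon 2 i\<close> unfolding T_def by simp
    qed
  qed
qed

definition Qj :: "nat \<Rightarrow> mser" where
  "Qj j = (if j = 0 then mzero else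
      madd (msmult ((2 * real j - 1) / 2) (mpow (mvar (2*j - 1)) 2))
           (msmult (real j) (mpow (mvar (2*j)) 2)))"

lemma quadsum_Qj: "quadsum m = (\<Sum>j\<in>{j. Qj j m \<noteq> 0}. Qj j m)"
  unfolding quadsum_def msuminf_def Qj_def by simp

lemma Qj_val:
  assumes "fsupp m"
  shows "Qj j m = (if j = 0 then 0 else
     (if m = mon 2 (2*j - 1) then (2 * real j - 1) / 2 else 0) + (if m = mon 2 (2*j) then real j else 0))"
  unfolding Qj_def using mvar2[OF assms] by (simp add: mzero_def madd_def msmult_def)

lemma quad_H2:
  assumes "fsupp m" "\<forall>i. m \<noteq> mon 2 i"
  shows "quadsum m = 0"
proof -
  have "Qj j m = 0" for j using Qj_val[OF assms(1)] assms(2) by simp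
  then show ?thesis unfolding quadsum_Qj by simp
qed

lemma quad_H1: "quadsum (mon 2 i) = real i / 2"
proof (cases "i = 0")
  case True
  have "Qj j (mon 2 i) = 0" for j
  proof -
    have "mon 2 i \<noteq> mon 2 (2 * j - 1)" if "j \<noteq> 0" using that True mon_eq[of 2] by simp
    moreover have "mon 2 i \<noteq> mon 2 (2 * j)" if "j \<noteq> 0" using that True mon_eq[of 2] by simp
    ultimately show ?thesis using Qj_val[OF mon_fsupp] by simp
  qed
  then show ?thesis unfolding quadsum_Qj using True by simp
next
  case False
  define j0 where "j0 = (i + 1) div 2"
  have j0: "j0 \<noteq> 0" using False unfolding j0_def by simp
  have other: "Qj j (mon 2 i) = 0" if "j \<noteq> j0" for j
  proof -
    have "i \<noteq> 2 * j - 1" if "j \<noteq> 0" using \<open>j \<noteq> j0\<close> that unfolding j0_def by auto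
    moreover have "i \<noteq> 2 * j" using \<open>j \<noteq> j0\<close> unfolding j0_def by auto
    ultimately show ?thesis using Qj_val[OF mon_fsupp] mon_eq[of 2] by auto
  qed
  have val: "Qj j0 (mon 2 i) = real i / 2"
  proof (cases "odd i")
    case True
    then have e: "2 * j0 - 1 = i" "2 * j0 \<noteq> i" unfolding j0_def by auto
    have "real (2 * j0 - 1) = 2 * real j0 - 1" using j0 by (simp add: of_nat_diff)
    then have "(2 * real j0 - 1) / 2 = real i / 2" using e by simp
    then show ?thesis using Qj_val[OF mon_fsupp] j0 e mon_eq[of 2] by simp
  next
    case False
    then have e: "2 * j0 - 1 \<noteq> i" "2 * j0 = i" using \<open>i \<noteq> 0\<close> unfolding j0_def by auto
    then show ?thesis using Qj_val[OF mon_fsupp] j0 mon_eq[of 2] by auto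
  qed
  show ?thesis unfolding quadsum_Qj using single_sum[of j0, OF other] val by simp
qed

lemma quad_msr: "msr (msmult s quadsum) (\<lambda>i. s * (real i / 2)) 2"
proof
  show "(1::nat) \<le> 2" by simp
  show "\<And>i. msmult s quadsum (mon 2 i) = s * (real i / 2)" by (simp add: msmult_def quad_H1)
  show "\<And>a. fsupp a \<Longrightarrow> \<forall>i. a \<noteq> mon 2 i \<Longrightarrow> msmult s quadsum a = 0"
    using quad_H2 by (simp add: msmult_def)
qed

definition Oj :: "nat \<Rightarrow> mser" where
  "Oj j = (if j = 0 then mzero else mvar (2*j - 1))"

lemma oddvars_Oj: "oddvars m = (\<Sum>j\<in>{j. Oj j m \<noteq> 0}. Oj j m)"
  unfolding oddvars_def msuminf_def Oj_def by simp

lemma Oj_val: "Oj j m = (if j = 0 then 0 else if m = mon 1 (2*j - 1) then 1 else 0)"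
  unfolding Oj_def by (simp add: mzero_def mvar_mon)

lemma odd_H1: "oddvars (mon 1 i) = (if odd i then 1 else 0)"
proof (cases "odd i")
  case True
  define j0 where "j0 = (i + 1) div 2"
  have e: "2 * j0 - 1 = i" "j0 \<noteq> 0" using True unfolding j0_def by auto
  have other: "Oj j (mon 1 i) = 0" if "j \<noteq> j0" for j
  proof -
    have "i \<noteq> 2 * j - 1" if "j \<noteq> 0" using \<open>j \<noteq> j0\<close> that unfolding j0_def by auto
    then show ?thesis using Oj_val mon_eq[of 1] by auto
  qed
  have "Oj j0 (mon 1 i) = 1" using Oj_val e by simp
  then show ?thesis unfolding oddvars_Oj using single_sum[of j0, OF other] True by simp
next
  case False
  have "Oj j (mon 1 i) = 0" for j
  proof -
    have "i \<noteq> 2 * j - 1" if "j \<noteq> 0" using False that by auto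
    then show ?thesis using Oj_val mon_eq[of 1] by auto
  qed
  then show ?thesis unfolding oddvars_Oj using False by simp
qed

lemma odd_H2: "\<forall>i. m \<noteq> mon 1 i \<Longrightarrow> oddvars m = 0"
proof -
  assume "\<forall>i. m \<noteq> mon 1 i"
  then have "Oj j m = 0" for j using Oj_val by simp
  then show ?thesis unfolding oddvars_Oj by simp
qed

lemma odd_msr: "msr oddvars (\<lambda>i. if odd i then 1 else 0) 1"
proof
  show "(1::nat) \<le> 1" by simp
  show "\<And>i. oddvars (mon 1 i) = (if odd i then 1 else 0)" by (rule odd_H1)
  show "\<And>a. fsupp a \<Longrightarrow> \<forall>i. a \<noteq> mon 1 i \<Longrightarrow> oddvars a = 0" using odd_H2 by blast
qed

lemma EA:
  assumes "fsupp a"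
  shows "mexp oddvars a = (\<Prod>j\<in>supp a. (if odd j then 1 else 0) ^ a j / fact (a j))"
proof -
  interpret msr oddvars "\<lambda>i. if odd i then 1 else 0" 1 by (rule odd_msr)
  show ?thesis using EXP[OF assms] unfolding PU_def by simp
qed

lemma EB:
  assumes "fsupp b"
  shows "mexp (msmult s quadsum) b = (if \<forall>i. 2 dvd b i then
      (\<Prod>j\<in>supp b. (s * (real j / 2)) ^ (b j div 2) / fact (b j div 2)) else 0)"
proof -
  interpret msr "msmult s quadsum" "\<lambda>i. s * (real i / 2)" 2 by (rule quad_msr)
  show ?thesis using EXP[OF assms] unfolding PU_def by simp
qed


definition f1 :: "nat \<Rightarrow> nat \<Rightarrow> real" where
  "f1 j r = (if odd j then 1 else 0) ^ r / fact r"
definition f2 :: "real \<Rightarrow> nat \<Rightarrow> nat \<Rightarrow> real" where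
  "f2 s j r = (if even r then (s * (real j / 2)) ^ (r div 2) / fact (r div 2) else 0)"
definition cv :: "(nat \<Rightarrow> real) \<Rightarrow> (nat \<Rightarrow> real) \<Rightarrow> nat \<Rightarrow> real" where
  "cv u g m = (\<Sum>r\<le>m. u r * g (m - r))"
definition hh :: "real \<Rightarrow> nat \<Rightarrow> nat \<Rightarrow> real" where
  "hh s j m = cv (f1 j) (f2 s j) m"

lemma EA_U:
  assumes "fsupp a" "finite U" "supp a \<subseteq> U"
  shows "mexp oddvars a = (\<Prod>j\<in>U. f1 j (a j))"
  unfolding EA[OF assms(1)] f1_def
  by (rule prod.mono_neutral_left) (use assms in \<open>auto simp: supp_def\<close>)

lemma EB_U:
  assumes "fsupp b" "finite U" "supp b \<subseteq> U"
  shows "mexp (msmult s quadsum) b = (\<Prod>j\<in>U. f2 s j (b j))"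
proof (cases "\<forall>i. 2 dvd b i")
  case True
  have "(\<Prod>j\<in>supp b. (s * (real j / 2)) ^ (b j div 2) / fact (b j div 2)) = (\<Prod>j\<in>U. f2 s j (b j))"
  proof -
    have "(\<Prod>j\<in>supp b. (s * (real j / 2)) ^ (b j div 2) / fact (b j div 2)) =
          (\<Prod>j\<in>U. (s * (real j / 2)) ^ (b j div 2) / fact (b j div 2))"
      by (rule prod.mono_neutral_left) (use assms in \<open>auto simp: supp_def\<close>)
    also have "\<dots> = (\<Prod>j\<in>U. f2 s j (b j))"
      by (rule prod.cong) (use True in \<open>auto simp: f2_def\<close>)
    finally show ?thesis .
  qed
  then show ?thesis using EB[OF assms(1)] True by simp
next
  case False
  then obtain i where i: "odd (b i)" by blast
  have "b i \<noteq> 0"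
  proof
    assume "b i = 0" then show False using i by simp
  qed
  then have "i \<in> U" using assms(3) unfolding supp_def by auto
  then have "(\<Prod>j\<in>U. f2 s j (b j)) = 0"
    by (intro prod_zero) (use assms(2) i in \<open>auto simp: f2_def\<close>)
  then show ?thesis using EB[OF assms(1)] False by simp
qed

lemma CONV:
  assumes U: "finite U" and cU: "\<forall>i. c i \<noteq> 0 \<longrightarrow> i \<in> U"
  shows "mmul (mexp oddvars) (mexp (msmult s quadsum)) c = (\<Prod>j\<in>U. hh s j (c j))"
proof -
  have sc: "supp c \<subseteq> U" using cU unfolding supp_def by auto
  have fc: "fsupp c" unfolding fsupp_def using finite_subset[OF sc U] unfolding supp_def by simp
  let ?h = "\<lambda>g. \<Prod>j\<in>U. f1 j (g j) * f2 s j (c j - g j)"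
  have "mmul (mexp oddvars) (mexp (msmult s quadsum)) c
      = (\<Sum>p\<in>Dec c. (\<Prod>j\<in>U. f1 j (fst p j) * f2 s j (snd p j)))"
    unfolding mmul_Dec
  proof (rule sum.cong[OF refl])
    fix p assume p: "p \<in> Dec c"
    obtain a b where ab: "p = (a, b)" by fastforce
    have abD: "(a, b) \<in> Dec c" using p ab by simp
    have "mexp oddvars a = (\<Prod>j\<in>U. f1 j (a j))"
      using EA_U[OF Dec_fsupp(1)[OF abD fc] U] Dec_fsupp(3)[OF abD fc] sc by blast
    moreover have "mexp (msmult s quadsum) b = (\<Prod>j\<in>U. f2 s j (b j))"
      using EB_U[OF Dec_fsupp(2)[OF abD fc] U] Dec_fsupp(4)[OF abD fc] sc by blast
    ultimately show "(case p of (a, b) \<Rightarrow> mexp oddvars a * mexp (msmult s quadsum) b)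
        = (\<Prod>j\<in>U. f1 j (fst p j) * f2 s j (snd p j))"
      using ab by (simp add: prod.distrib)
  qed
  also have "\<dots> = (\<Sum>g\<in>PiE U (\<lambda>j. {..c j}). ?h g)"
  proof (rule sum.reindex_bij_witness[where j = "\<lambda>p. restrict (fst p) U"
        and i = "\<lambda>g. (\<lambda>k. if k \<in> U then g k else 0, \<lambda>k. if k \<in> U then c k - g k else 0)"])
    fix p assume p: "p \<in> Dec c"
    obtain a b where ab: "p = (a, b)" by fastforce
    have e: "a k + b k = c k" for k using p ab unfolding Dec_def by auto
    have z: "a k = 0 \<and> b k = 0" if "k \<notin> U" for k
    proof -
      have "c k = 0" using cU that by blast
      then show ?thesis using e[of k] by simp
    qed
    have "(\<lambda>k. if k \<in> U then restrict a U k else 0) = a"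
    proof
      fix k show "(if k \<in> U then restrict a U k else 0) = a k" using z[of k] by auto
    qed
    moreover have "(\<lambda>k. if k \<in> U then c k - restrict a U k else 0) = b"
    proof
      fix k have "c k - a k = b k" using e[of k] by simp
      then show "(if k \<in> U then c k - restrict a U k else 0) = b k" using z[of k] by auto
    qed
    ultimately show "(\<lambda>k. if k \<in> U then restrict (fst p) U k else 0, \<lambda>k. if k \<in> U then c k - restrict (fst p) U k else 0) = p"
      unfolding ab fst_conv by simp
    have "a k \<le> c k" for k using e[of k] by simp
    then show "restrict (fst p) U \<in> PiE U (\<lambda>j. {..c j})"
      using ab by (simp add: restrict_PiE_iff)
    have "f1 j (a j) * f2 s j (c j - a j) = f1 j (a j) * f2 s j (b j)" for j
    proof -
      have "c j - a j = b j" using e[of j] by linarith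
      then show ?thesis by simp
    qed
    then show "?h (restrict (fst p) U) = (\<Prod>j\<in>U. f1 j (fst p j) * f2 s j (snd p j))"
      unfolding ab fst_conv snd_conv by (intro prod.cong refl) simp
  next
    fix g assume g: "g \<in> PiE U (\<lambda>j. {..c j})"
    show "restrict (fst (\<lambda>k. if k \<in> U then g k else 0, \<lambda>k. if k \<in> U then c k - g k else 0)) U = g"
    proof
      fix k show "restrict (fst (\<lambda>k. if k \<in> U then g k else 0, \<lambda>k. if k \<in> U then c k - g k else 0)) U k = g k"
        using PiE_arb[OF g, of k] by (cases "k \<in> U") simp_all
    qed
    have le: "g k \<le> c k" if "k \<in> U" for k using g that unfolding PiE_iff by blast
    have z: "c k = 0" if "k \<notin> U" for k using cU that by blast
    have "\<forall>k. (if k \<in> U then g k else 0) + (if k \<in> U then c k - g k else 0) = c k"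
    proof
      fix k show "(if k \<in> U then g k else 0) + (if k \<in> U then c k - g k else 0) = c k"
        using le[of k] z[of k] by (cases "k \<in> U") simp_all
    qed
    then show "(\<lambda>k. if k \<in> U then g k else 0, \<lambda>k. if k \<in> U then c k - g k else 0) \<in> Dec c"
      unfolding Dec_def by simp
  qed
  also have "\<dots> = (\<Prod>j\<in>U. \<Sum>r\<in>{..c j}. f1 j r * f2 s j (c j - r))"
    by (rule prod_sum_PiE[symmetric]) (use U in auto)
  also have "\<dots> = (\<Prod>j\<in>U. hh s j (c j))" unfolding hh_def cv_def ..
  finally show ?thesis .
qed

lemma cv_comm: "cv u g m = cv g u m"
  unfolding cv_def
  by (rule sum.reindex_bij_witness[where i = "\<lambda>r. m - r" and j = "\<lambda>r. m - r"]) (auto simp: mult.commute)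

lemma cv_suc:
  "real (Suc m) * cv u g (Suc m) = cv (\<lambda>r. real (Suc r) * u (Suc r)) g m + cv u (\<lambda>q. real q * g q) (Suc m)"
proof -
  have "real (Suc m) * cv u g (Suc m) = (\<Sum>r\<le>Suc m. (real r + real (Suc m - r)) * (u r * g (Suc m - r)))"
    unfolding cv_def sum_distrib_left by (rule sum.cong) auto
  also have "\<dots> = (\<Sum>r\<le>Suc m. real r * (u r * g (Suc m - r)) + real (Suc m - r) * (u r * g (Suc m - r)))"
    by (simp only: distrib_right)
  also have "\<dots> = (\<Sum>r\<le>Suc m. real r * (u r * g (Suc m - r))) + (\<Sum>r\<le>Suc m. real (Suc m - r) * (u r * g (Suc m - r)))"
    by (rule sum.distrib)
  also have "(\<Sum>r\<le>Suc m. real (Suc m - r) * (u r * g (Suc m - r))) = cv u (\<lambda>q. real q * g q) (Suc m)"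
    unfolding cv_def by (rule sum.cong[OF refl]) (rule mult.left_commute)
  also have "(\<Sum>r\<le>Suc m. real r * (u r * g (Suc m - r))) = cv (\<lambda>r. real (Suc r) * u (Suc r)) g m"
    unfolding cv_def by (subst sum.atMost_Suc_shift) (simp add: mult.assoc del: of_nat_Suc)
  finally show ?thesis .
qed

lemma aux_f1: "(t::real) \<noteq> 0 \<Longrightarrow> t * (1 / (t * f)) = 1 / f" by simp

lemma f1_rec: "real (Suc r) * f1 j (Suc r) = (if odd j then 1 else 0) * f1 j r"
proof (cases "odd j")
  case True
  have "real (Suc r) * (1 / (real (Suc r) * fact r)) = 1 / (fact r :: real)"
    by (rule aux_f1) simp
  then show ?thesis using True unfolding f1_def by (simp del: of_nat_Suc)
next
  case False then show ?thesis unfolding f1_def by simp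
qed

lemma aux_f2: "(t::real) \<noteq> 0 \<Longrightarrow> (2 * t) * (a ^ Suc p / (t * f)) = (2 * a) * (a ^ p / f)"
  by (simp add: field_simps)

lemma f2_rec: "real (Suc (Suc q)) * f2 s j (Suc (Suc q)) = (s * real j) * f2 s j q"
proof (cases "even q")
  case True
  then obtain p where p: "q = 2 * p" by blast
  have d: "Suc (Suc q) div 2 = Suc p" "q div 2 = p" using p by auto
  have r: "real (Suc (Suc q)) = 2 * real (Suc p)" using p by simp
  have "(2 * real (Suc p)) * ((s * (real j / 2)) ^ Suc p / (real (Suc p) * fact p))
        = (2 * (s * (real j / 2))) * ((s * (real j / 2)) ^ p / fact p)"
    by (rule aux_f2) simp
  moreover have "2 * (s * (real j / 2)) = s * real j" by simp
  ultimately show ?thesis using True p unfolding f2_def d r by (simp del: of_nat_Suc)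
next
  case False then show ?thesis unfolding f2_def by simp
qed

lemma f2_1: "f2 s j (Suc 0) = 0" unfolding f2_def by simp

lemma hh_rec:
  "real (Suc (Suc m)) * hh s j (Suc (Suc m)) = (if odd j then 1 else 0) * hh s j (Suc m) + (s * real j) * hh s j m"
proof -
  let ?x = "(if odd j then 1 else 0) :: real"
  have A: "cv (\<lambda>r. real (Suc r) * f1 j (Suc r)) (f2 s j) (Suc m) = ?x * hh s j (Suc m)"
    unfolding hh_def cv_def f1_rec by (simp add: sum_distrib_left algebra_simps)
  have "cv (f1 j) (\<lambda>q. real q * f2 s j q) (Suc (Suc m)) = cv (\<lambda>q. real q * f2 s j q) (f1 j) (Suc (Suc m))"
    by (rule cv_comm)
  also have "\<dots> = (\<Sum>q\<le>m. real (Suc (Suc q)) * f2 s j (Suc (Suc q)) * f1 j (m - q))"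
    unfolding cv_def sum.atMost_Suc_shift by (simp add: f2_1 del: of_nat_Suc)
  also have "\<dots> = (s * real j) * cv (f2 s j) (f1 j) m"
    unfolding cv_def f2_rec by (simp add: sum_distrib_left algebra_simps)
  also have "cv (f2 s j) (f1 j) m = hh s j m" unfolding hh_def by (rule cv_comm)
  finally have B: "cv (f1 j) (\<lambda>q. real q * f2 s j q) (Suc (Suc m)) = (s * real j) * hh s j m" .
  show ?thesis unfolding hh_def using cv_suc[of "Suc m" "f1 j" "f2 s j"] A B unfolding hh_def by simp
qed

lemma hh_G: "fact m * hh s j m = G s j m"
proof (induction s j m rule: G.induct)
  case (1 s k) then show ?case unfolding hh_def cv_def f1_def f2_def by simp
next
  case (2 s k) then show ?case unfolding hh_def cv_def f1_def f2_def by simp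
next
  case (3 s k m)
  have "fact (Suc (Suc m)) * hh s k (Suc (Suc m)) = fact (Suc m) * (real (Suc (Suc m)) * hh s k (Suc (Suc m)))"
    by (simp add: algebra_simps)
  also have "\<dots> = (if odd k then 1 else 0) * (fact (Suc m) * hh s k (Suc m)) + s * real k * real (Suc m) * (fact m * hh s k m)"
    unfolding hh_rec by (simp add: algebra_simps)
  finally show ?case using 3 by simp
qed


lemma mmul_comb: "mmul f (\<lambda>b. a * (g1 b + t * g2 b)) m = a * (mmul f g1 m + t * mmul f g2 m)"
proof -
  have "mmul f (\<lambda>b. a * (g1 b + t * g2 b)) m = (\<Sum>p\<in>Dec m. a * (f (fst p) * g1 (snd p)) + (a * t) * (f (fst p) * g2 (snd p)))"
    unfolding mmul_Dec by (rule sum.cong) (auto simp: algebra_simps)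
  also have "\<dots> = a * (\<Sum>p\<in>Dec m. f (fst p) * g1 (snd p)) + (a * t) * (\<Sum>p\<in>Dec m. f (fst p) * g2 (snd p))"
    by (simp add: sum.distrib sum_distrib_left)
  also have "(\<Sum>p\<in>Dec m. f (fst p) * g1 (snd p)) = mmul f g1 m" unfolding mmul_Dec by (simp add: case_prod_beta)
  also have "(\<Sum>p\<in>Dec m. f (fst p) * g2 (snd p)) = mmul f g2 m" unfolding mmul_Dec by (simp add: case_prod_beta)
  finally show ?thesis by (simp add: algebra_simps)
qed

lemma msmult_1: "msmult 1 f = f" unfolding msmult_def by simp
lemma mneg_msmult: "mneg f = msmult (-1) f" unfolding msmult_def mneg_def by simp

lemma even_M: "even_series m = 1/2 * (mmul (mexp oddvars) (mexp (msmult 1 quadsum)) m + 1 * mmul (mexp oddvars) (mexp (msmult (-1) quadsum)) m)"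
proof -
  have "mcosh quadsum = (\<lambda>b. 1/2 * (mexp (msmult 1 quadsum) b + 1 * mexp (msmult (-1) quadsum) b))"
    unfolding mcosh_def msmult_def madd_def mneg_def by (simp add: msmult_def[symmetric] msmult_1)
  then show ?thesis unfolding even_series_def by (simp only: mmul_comb)
qed

lemma odd_M: "odd_series m = 1/2 * (mmul (mexp oddvars) (mexp (msmult 1 quadsum)) m + (-1) * mmul (mexp oddvars) (mexp (msmult (-1) quadsum)) m)"
proof -
  have "msinh quadsum = (\<lambda>b. 1/2 * (mexp (msmult 1 quadsum) b + (-1) * mexp (msmult (-1) quadsum) b))"
    unfolding msinh_def msmult_def madd_def mneg_def by (simp add: msmult_def[symmetric] msmult_1)
  then show ?thesis unfolding odd_series_def by (simp only: mmul_comb)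
qed

lemma Rw_EO:
  assumes "finite S"
  shows "Rw s S \<sigma> = real (card {\<tau>. \<tau> permutes S \<and> \<tau> \<circ> \<tau> = \<sigma> \<and> evenperm \<tau>})
     + s * real (card {\<tau>. \<tau> permutes S \<and> \<tau> \<circ> \<tau> = \<sigma> \<and> \<not> evenperm \<tau>})"
proof -
  have fr: "finite (roots S \<sigma>)" using finite_roots[OF assms] .
  have "Rw s S \<sigma> = (\<Sum>\<tau>\<in>roots S \<sigma> \<inter> {\<tau>. evenperm \<tau>}. wt s \<tau>) + (\<Sum>\<tau>\<in>roots S \<sigma> - {\<tau>. evenperm \<tau>}. wt s \<tau>)"
    unfolding Rw_def by (rule sum.Int_Diff[OF fr])
  also have "roots S \<sigma> \<inter> {\<tau>. evenperm \<tau>} = {\<tau>. \<tau> permutes S \<and> \<tau> \<circ> \<tau> = \<sigma> \<and> evenperm \<tau>}"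
    unfolding roots_def by blast
  also have "roots S \<sigma> - {\<tau>. evenperm \<tau>} = {\<tau>. \<tau> permutes S \<and> \<tau> \<circ> \<tau> = \<sigma> \<and> \<not> evenperm \<tau>}"
    unfolding roots_def by blast
  also have "(\<Sum>\<tau>\<in>{\<tau>. \<tau> permutes S \<and> \<tau> \<circ> \<tau> = \<sigma> \<and> evenperm \<tau>}. wt s \<tau>)
      = (\<Sum>\<tau>\<in>{\<tau>. \<tau> permutes S \<and> \<tau> \<circ> \<tau> = \<sigma> \<and> evenperm \<tau>}. 1)"
    by (rule sum.cong) (auto simp: wt_def)
  also have "(\<Sum>\<tau>\<in>{\<tau>. \<tau> permutes S \<and> \<tau> \<circ> \<tau> = \<sigma> \<and> \<not> evenperm \<tau>}. wt s \<tau>)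
      = (\<Sum>\<tau>\<in>{\<tau>. \<tau> permutes S \<and> \<tau> \<circ> \<tau> = \<sigma> \<and> \<not> evenperm \<tau>}. s)"
    by (rule sum.cong) (auto simp: wt_def)
  finally show ?thesis by (simp only: sum_constant mult_1_right mult.commute)
qed

lemma aux_fin1:
  assumes "A * P = E + Od" "B * P = E - (Od::real)"
  shows "1/2 * (A + 1 * B) * P = E"
proof -
  have "1/2 * (A + 1 * B) * P = (A * P + B * P) / 2" by (simp add: algebra_simps)
  then show ?thesis using assms by simp
qed

lemma aux_fin2:
  assumes "A * P = E + Od" "B * P = E - (Od::real)"
  shows "1/2 * (A + (-1) * B) * P = Od"
proof -
  have "1/2 * (A + (-1) * B) * P = (A * P - B * P) / 2" by (simp add: algebra_simps)
  then show ?thesis using assms by simp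
qed

theorem mainTheorem6:
  fixes n :: nat and c :: "nat \<Rightarrow> nat" and \<sigma> :: "nat \<Rightarrow> nat"
  assumes "n > 0"
    and "\<forall>i. c i \<noteq> 0 \<longrightarrow> 1 \<le> i \<and> i \<le> n"
    and "n = (\<Sum>i = 1..n. i * c i)"
    and "\<sigma> permutes {1..n}"
    and "has_cycle_type n \<sigma> c"
  shows "egf_coeff even_series n c =
           real (card {\<tau>. \<tau> permutes {1..n} \<and> \<tau> \<circ> \<tau> = \<sigma> \<and> evenperm \<tau>})
       \<and> egf_coeff odd_series n c =
           real (card {\<tau>. \<tau> permutes {1..n} \<and> \<tau> \<circ> \<tau> = \<sigma> \<and> \<not> evenperm \<tau>})"
proof -
  let ?U = "{1..n}"
  let ?E = "real (card {\<tau>. \<tau> permutes {1..n} \<and> \<tau> \<circ> \<tau> = \<sigma> \<and> evenperm \<tau>})"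
  let ?O = "real (card {\<tau>. \<tau> permutes {1..n} \<and> \<tau> \<circ> \<tau> = \<sigma> \<and> \<not> evenperm \<tau>})"
  let ?P = "(\<Prod>i = 1..n. fact (c i)) :: real"
  have cU: "\<forall>i. c i \<noteq> 0 \<longrightarrow> i \<in> ?U" using assms(2) by auto
  have ct: "ct ?U \<sigma> j = c j" if "j \<in> ?U" for j
    using assms(5) that unfolding has_cycle_type_def ct_def OS_def by blast
  have key: "mmul (mexp oddvars) (mexp (msmult s quadsum)) c * ?P = ?E + s * ?O" if s: "s * s = 1" for s
  proof -
    have "mmul (mexp oddvars) (mexp (msmult s quadsum)) c * ?P = (\<Prod>j\<in>?U. hh s j (c j)) * ?P"
      using CONV[OF _ cU] by simp
    also have "\<dots> = (\<Prod>j\<in>?U. fact (c j) * hh s j (c j))" by (simp add: prod.distrib mult.commute)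
    also have "\<dots> = (\<Prod>j\<in>?U. G s j (ct ?U \<sigma> j))"
    proof (rule prod.cong[OF refl])
      fix j assume j: "j \<in> ?U"
      show "fact (c j) * hh s j (c j) = G s j (ct ?U \<sigma> j)" by (simp only: hh_G ct[OF j])
    qed
    also have "\<dots> = Rw s ?U \<sigma>"
      using main_perm[of ?U \<sigma> s n] assms(4) s by simp
    also have "\<dots> = ?E + s * ?O" using Rw_EO[of ?U s \<sigma>] by simp
    finally show ?thesis .
  qed
  have k1: "mmul (mexp oddvars) (mexp (msmult 1 quadsum)) c * ?P = ?E + ?O" using key[of 1] by simp
  have k2: "mmul (mexp oddvars) (mexp (msmult (-1) quadsum)) c * ?P = ?E - ?O" using key[of "-1"] by simp
  have "egf_coeff even_series n c = ?E"
    unfolding egf_coeff_def even_M by (rule aux_fin1[OF k1 k2])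
  moreover have "egf_coeff odd_series n c = ?O"
    unfolding egf_coeff_def odd_M by (rule aux_fin2[OF k1 k2])
  ultimately show ?thesis by simp
qed

end
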